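(* Let $(X(t),T(t))_{t\ge0}$ be the joint KMP–temperature process described in the context, with $X(0)$ and $T(0)$ independent, $X(0)$ distributed according to $\mu^X$ (product of independent exponential random variables of mean $1$ on $\mathbb R_+^{\overline{\mathbb V}}$), and $T(0)$ distributed according to an arbitrary probability measure $\nu$ on $\{s\in\mathbb R_+^{\overline{\mathbb V}}: s_j=T_j\ \forall j\in\partial\mathbb V\}$. Then for every $t\ge0$, $X(t)$ and $T(t)$ are independent, and the marginal process $(T(t))_{t\ge0}$ has the law of the opinion process $O$ with initial distribution $\nu$. In particular $(X(t),T(t))$ has law $\mu^X(d\underline x)\,[\nu e^{tL^O}](d\underline s)$, where $\nu e^{tL^O}$ denotes the law at time $t$ of the opinion process started from $\nu$.
   Context: Graph: $(\overline{\mathbb V},\overline E)$ is a finite oriented graph; $\overline{\mathbb V}=\mathbb V\cup\partial\mathbb V$ (disjoint; internal and boundary vertices). There is at most one edge between any pair of vertices and if $ij\in\overline E$ then $ji\notin\overline E$. $E$ is the set of edges with both endpoints in $\mathbb V$, $\partial E$ the set of edges with one endpoint in $\partial\mathbb V$; there are no edges between two boundary vertices, and every boundary edge is written $ij$ with $i\in\mathbb V$, $j\in\partial\mathbb V$. $\overline E=E\cup\partial E$. Each $j\in\partial\mathbb V$ carries a fixed temperature $T_j>0$. Joint KMP–temperature process $(X,T)$ on $\mathbb R_+^{\overline{\mathbb V}}\times\mathbb R_+^{\overline{\mathbb V}}$: generator $L^{X,T}f(X,T)=\sum_{ij\in E}\int_0^1du\,[f(H_{i,j;u}(X,T))-f(X,T)]+\sum_{ij\in\partial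 E}\int_0^\infty db\,e^{-b}\int_0^1du\,[f(H_{i,j;b,u}(X,T))-f(X,T)]$, where, writing $\bar T:=\frac{X_i}{X_i+X_j}T_i+\frac{X_j}{X_i+X_j}T_j$: $H_{i,j;u}$ sets $(X_i,T_i)\to(u(X_i+X_j),\bar T)$, $(X_j,T_j)\to((1-u)(X_i+X_j),\bar T)$ and leaves other coordinates unchanged; $H_{i,j;b,u}$ (for $j\in\partial\mathbb V$) sets $(X_i,T_i)\to(u(X_i+X_j),\bar T)$, $(X_j,T_j)\to(b,T_j)$ and leaves other coordinates unchanged. Opinion process $O$ with boundary conditions $T_{\partial\mathbb V}$: Markov process on $\mathbb R_+^{\overline{\mathbb V}}$ with $O_j\equiv T_j$ for $j\in\partial\mathbb V$ and generator $L^Of(O)=\sum_{ij\in\overline E}\int_0^1dv\,[f(H^O_{ij;v}O)-f(O)]$, where $(H^O_{ij;v}O)_\ell=vO_i+(1-v)O_j$ for $\ell\in\{i,j\}\cap\mathbb V$ and $(H^O_{ij;v}O)_\ell=O_\ell$ otherwise. *)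

theory Defs
  imports "HOL-Probability.Probability"
begin

text \<open>Vertices have type 'v. V = internal vertices, B = boundary vertices,
  Ebar = set of oriented edges (pairs (i,j)).  Tb = boundary temperatures.\<close>

definition graph_ok :: "'v set \<Rightarrow> 'v set \<Rightarrow> ('v \<times> 'v) set \<Rightarrow> bool" where
  "graph_ok V B Ebar \<longleftrightarrow> finite V \<and> finite B \<and> V \<inter> B = {} \<and>
     Ebar \<subseteq> (V \<union> B) \<times> (V \<union> B) \<and>
     (\<forall>i j. (i, j) \<in> Ebar \<longrightarrow> (j, i) \<notin> Ebar) \<and>
     (\<forall>i j. (i, j) \<in> Ebar \<longrightarrow> i \<in> V)"
  \<comment> \<open>no edges between two boundary vertices; every boundary edge is written ij with i internal, j boundary\<close>

definition bulk_edges :: "'v set \<Rightarrow> ('v \<times> 'v) set \<Rightarrow> ('v \<times> 'v) set" where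
  "bulk_edges V Ebar = {(i, j) \<in> Ebar. i \<in> V \<and> j \<in> V}"

definition bdry_edges :: "'v set \<Rightarrow> ('v \<times> 'v) set \<Rightarrow> ('v \<times> 'v) set" where
  "bdry_edges B Ebar = {(i, j) \<in> Ebar. j \<in> B}"

definition SX :: "'v set \<Rightarrow> 'v set \<Rightarrow> ('v \<Rightarrow> real) measure" where
  "SX V B = PiM (V \<union> B) (\<lambda>_. borel)"

definition SXT :: "'v set \<Rightarrow> 'v set \<Rightarrow> (('v \<Rightarrow> real) \<times> ('v \<Rightarrow> real)) measure" where
  "SXT V B = SX V B \<Otimes>\<^sub>M SX V B"

definition unif01 :: "real measure" where
  "unif01 = uniform_measure lborel {0..1}"

definition expo1 :: "real measure" where
  "expo1 = density lborel (exponential_density 1)"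

definition muX :: "'v set \<Rightarrow> 'v set \<Rightarrow> ('v \<Rightarrow> real) measure" where
  "muX V B = PiM (V \<union> B) (\<lambda>_. expo1)"

definition Tbar :: "('v \<Rightarrow> real) \<Rightarrow> ('v \<Rightarrow> real) \<Rightarrow> 'v \<Rightarrow> 'v \<Rightarrow> real" where
  "Tbar x s i j = x i / (x i + x j) * s i + x j / (x i + x j) * s j"

definition H_bulk :: "'v \<Rightarrow> 'v \<Rightarrow> real \<Rightarrow> ('v \<Rightarrow> real) \<times> ('v \<Rightarrow> real)
    \<Rightarrow> ('v \<Rightarrow> real) \<times> ('v \<Rightarrow> real)" where
  "H_bulk i j u xs = (case xs of (x, s) \<Rightarrow>
     (x(i := u * (x i + x j), j := (1 - u) * (x i + x j)),
      s(i := Tbar x s i j, j := Tbar x s i j)))"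

definition H_bdry :: "'v \<Rightarrow> 'v \<Rightarrow> real \<Rightarrow> real \<Rightarrow> ('v \<Rightarrow> real) \<times> ('v \<Rightarrow> real)
    \<Rightarrow> ('v \<Rightarrow> real) \<times> ('v \<Rightarrow> real)" where
  "H_bdry i j b u xs = (case xs of (x, s) \<Rightarrow>
     (x(i := u * (x i + x j), j := b), s(i := Tbar x s i j)))"

definition H_op :: "'v set \<Rightarrow> 'v \<Rightarrow> 'v \<Rightarrow> real \<Rightarrow> ('v \<Rightarrow> real) \<Rightarrow> ('v \<Rightarrow> real)" where
  "H_op V i j v s = (\<lambda>l. if l \<in> {i, j} \<inter> V then v * s i + (1 - v) * s j else s l)"

text \<open>Every edge rings at rate 1 (for boundary edges of the joint process the
  rate is the integral of e^{-b} db du = 1).  Uniformization with rate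
  Lambda = |Ebar| + 1: at each Poisson(Lambda) clock ring a uniformly chosen element
  of {None} \<union> Some ` Ebar is picked; None means no move.\<close>

definition unif_rate :: "('v \<times> 'v) set \<Rightarrow> real" where
  "unif_rate Ebar = real (card Ebar) + 1"

definition K_XT :: "'v set \<Rightarrow> 'v set \<Rightarrow> ('v \<times> 'v) set \<Rightarrow>
    ('v \<Rightarrow> real) \<times> ('v \<Rightarrow> real) \<Rightarrow> (('v \<Rightarrow> real) \<times> ('v \<Rightarrow> real)) measure" where
  "K_XT V B Ebar xs = measure_pmf (pmf_of_set (insert None (Some ` Ebar))) \<bind>
     (\<lambda>oe. case oe of
        None \<Rightarrow> return (SXT V B) xs
      | Some (i, j) \<Rightarrow>
          (if j \<in> B then distr (expo1 \<Otimes>\<^sub>M unif01) (SXT V B) (\<lambda>(b, u). H_bdry i j b u xs)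
           else distr unif01 (SXT V B) (\<lambda>u. H_bulk i j u xs)))"

definition K_O :: "'v set \<Rightarrow> 'v set \<Rightarrow> ('v \<times> 'v) set \<Rightarrow>
    ('v \<Rightarrow> real) \<Rightarrow> ('v \<Rightarrow> real) measure" where
  "K_O V B Ebar s = measure_pmf (pmf_of_set (insert None (Some ` Ebar))) \<bind>
     (\<lambda>oe. case oe of
        None \<Rightarrow> return (SX V B) s
      | Some (i, j) \<Rightarrow> distr unif01 (SX V B) (\<lambda>v. H_op V i j v s))"

definition poisson_meas :: "real \<Rightarrow> nat measure" where
  "poisson_meas r = density (count_space UNIV) (\<lambda>n. ennreal (r ^ n / fact n * exp (- r)))"

text \<open>Markov semigroup e^{tL} acting on probability measures: the law at time t of
  the uniformized jump process with kernel K and rate Lambda, started from mu.\<close>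
definition semigroup :: "real \<Rightarrow> ('s \<Rightarrow> 's measure) \<Rightarrow> real \<Rightarrow> 's measure \<Rightarrow> 's measure" where
  "semigroup Lam K t mu = poisson_meas (Lam * t) \<bind> (\<lambda>n. ((\<lambda>M. M \<bind> K) ^^ n) mu)"

definition P_XT :: "'v set \<Rightarrow> 'v set \<Rightarrow> ('v \<times> 'v) set \<Rightarrow> real \<Rightarrow>
    (('v \<Rightarrow> real) \<times> ('v \<Rightarrow> real)) measure \<Rightarrow> (('v \<Rightarrow> real) \<times> ('v \<Rightarrow> real)) measure" where
  "P_XT V B Ebar t mu = semigroup (unif_rate Ebar) (K_XT V B Ebar) t mu"

definition P_O :: "'v set \<Rightarrow> 'v set \<Rightarrow> ('v \<times> 'v) set \<Rightarrow> real \<Rightarrow>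
    ('v \<Rightarrow> real) measure \<Rightarrow> ('v \<Rightarrow> real) measure" where
  "P_O V B Ebar t mu = semigroup (unif_rate Ebar) (K_O V B Ebar) t mu"

text \<open>For a Markov process with transition laws (P t) (started at a point y via return),
  fdd_chain P [(t1,f1),...,(tk,fk)] tau y = E_y[ f1(Y(t1-tau)) ... fk(Y(tk-tau)) ].
  Integrating against the initial law at tau = 0 gives E[prod_i f_i(Y(t_i))], which
  for nonnegative measurable f_i determines the finite-dimensional distributions.\<close>
fun fdd_chain :: "(real \<Rightarrow> 's measure \<Rightarrow> 's measure) \<Rightarrow> 's measure \<Rightarrow>
    (real \<times> ('s \<Rightarrow> ennreal)) list \<Rightarrow> real \<Rightarrow> 's \<Rightarrow> ennreal" where
  "fdd_chain P S [] tau y = 1"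
| "fdd_chain P S ((t, f) # rest) tau y =
     (\<integral>\<^sup>+ z. f z * fdd_chain P S rest t z \<partial>(P (t - tau) (return S y)))"

end

theory Submission
  imports Defs
begin


lemma unif01_nn: assumes [measurable]: "f \<in> borel_measurable borel"
  shows "(\<integral>\<^sup>+u. f u \<partial>unif01) = (\<integral>\<^sup>+u. f u * indicator {0..1} u \<partial>lborel)"
  unfolding unif01_def by (subst nn_integral_uniform_measure) (auto simp: divide_ennreal_def)

definition ed :: "real \<Rightarrow> real" where "ed u = (if u < 0 then 0 else exp (-u))"

lemma ed_meas[measurable]: "ed \<in> borel_measurable borel" unfolding ed_def by measurable

lemma expo1_nn: assumes [measurable]: "f \<in> borel_measurable borel"
  shows "(\<integral>\<^sup>+u. f u \<partial>expo1) = (\<integral>\<^sup>+u. ennreal (ed u) * f u \<partial>lborel)"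
  unfolding expo1_def exponential_density_def ed_def
  by (subst nn_integral_density) (auto intro!: nn_integral_cong)

lemma prob_unif01: "prob_space unif01"
  unfolding unif01_def by (intro prob_space_uniform_measure) auto
lemma prob_expo1: "prob_space expo1"
  unfolding expo1_def by (rule prob_space_exponential_density) simp
interpretation U01: prob_space unif01 by (rule prob_unif01)
interpretation E1: prob_space expo1 by (rule prob_expo1)

lemma sets_unif01[simp, measurable_cong]: "sets unif01 = sets borel" unfolding unif01_def by simp
lemma sets_expo1[simp, measurable_cong]: "sets expo1 = sets borel" unfolding expo1_def by simp

lemma ed_prod: "ennreal (ed (s - b)) * ennreal (ed b) = ennreal (exp (-s)) * indicator {0..s} b"
  by (auto simp: ed_def indicator_def ennreal_mult'[symmetric] exp_add[symmetric])

lemma pf_lb: "pair_sigma_finite lborel lborel" ..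

lemma L2:
  fixes h :: "real \<Rightarrow> real \<Rightarrow> ennreal"
  assumes hm[measurable]: "(\<lambda>(a, b). h a b) \<in> borel_measurable (borel \<Otimes>\<^sub>M borel)"
  shows "(\<integral>\<^sup>+a. \<integral>\<^sup>+b. h a b \<partial>expo1 \<partial>expo1) =
    (\<integral>\<^sup>+s. ennreal (s * exp (-s)) * indicator {0<..} s * (\<integral>\<^sup>+u. h (u * s) ((1 - u) * s) \<partial>unif01) \<partial>lborel)"
proof -
  have hm2[measurable]: "(\<lambda>x. h (f x) (g x)) \<in> borel_measurable M"
    if [measurable]: "f \<in> borel_measurable M" "g \<in> borel_measurable M" for f g and M :: "'x measure"
    using measurable_compose[OF measurable_Pair[OF that] hm] by simp
  have "(\<integral>\<^sup>+a. \<integral>\<^sup>+b. h a b \<partial>expo1 \<partial>expo1) = (\<integral>\<^sup>+a. ennreal (ed a) * (\<integral>\<^sup>+b. ennreal (ed b) * h a b \<partial>lborel) \<partial>lborel)"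
    by (subst expo1_nn) (auto simp: expo1_nn intro!: nn_integral_cong)
  also have "\<dots> = (\<integral>\<^sup>+a. \<integral>\<^sup>+b. ennreal (ed a) * ennreal (ed b) * h a b \<partial>lborel \<partial>lborel)"
    by (subst nn_integral_cmult[symmetric]) (auto simp: mult.assoc)
  also have "\<dots> = (\<integral>\<^sup>+b. \<integral>\<^sup>+a. ennreal (ed a) * ennreal (ed b) * h a b \<partial>lborel \<partial>lborel)"
    by (rule pair_sigma_finite.Fubini'[OF pf_lb]) measurable
  also have "\<dots> = (\<integral>\<^sup>+b. \<integral>\<^sup>+s. ennreal (exp (-s)) * indicator {0..s} b * h (s - b) b \<partial>lborel \<partial>lborel)"
  proof (rule nn_integral_cong)
    fix b :: real
    have "(\<integral>\<^sup>+a. ennreal (ed a) * ennreal (ed b) * h a b \<partial>lborel) =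
       ennreal \<bar>1::real\<bar> * (\<integral>\<^sup>+s. ennreal (ed (-b + 1 * s)) * ennreal (ed b) * h (-b + 1 * s) b \<partial>lborel)"
      by (rule nn_integral_real_affine) auto
    also have "\<dots> = (\<integral>\<^sup>+s. ennreal (exp (-s)) * indicator {0..s} b * h (s - b) b \<partial>lborel)"
      by (simp add: ed_prod[symmetric])
    finally show "(\<integral>\<^sup>+a. ennreal (ed a) * ennreal (ed b) * h a b \<partial>lborel) = \<dots>" .
  qed
  also have "\<dots> = (\<integral>\<^sup>+s. \<integral>\<^sup>+b. ennreal (exp (-s)) * indicator {0..s} b * h (s - b) b \<partial>lborel \<partial>lborel)"
  proof -
    have [measurable]: "(\<lambda>(s::real, b::real). indicator {0..s} b :: ennreal) \<in> borel_measurable (lborel \<Otimes>\<^sub>M lborel)"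
      apply (subst measurable_cong[where g="\<lambda>x. if 0 \<le> snd x \<and> snd x \<le> fst x then 1 else 0"])
       apply (auto simp: indicator_def)[1]
      by (subst measurable_cong_sets[OF sets_pair_measure_cong[OF sets_lborel sets_lborel] refl]) measurable
    show ?thesis
      by (rule pair_sigma_finite.Fubini'[OF pf_lb, symmetric]) measurable
  qed
  also have "\<dots> = (\<integral>\<^sup>+s. ennreal (s * exp (-s)) * indicator {0<..} s * (\<integral>\<^sup>+u. h (u * s) ((1 - u) * s) \<partial>unif01) \<partial>lborel)"
  proof (rule nn_integral_cong)
    fix s :: real
    show "(\<integral>\<^sup>+b. ennreal (exp (-s)) * indicator {0..s} b * h (s - b) b \<partial>lborel) =
       ennreal (s * exp (-s)) * indicator {0<..} s * (\<integral>\<^sup>+u. h (u * s) ((1 - u) * s) \<partial>unif01)"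
    proof (cases "s > 0")
      case True
      have "(\<integral>\<^sup>+b. ennreal (exp (-s)) * indicator {0..s} b * h (s - b) b \<partial>lborel) =
        ennreal \<bar>-s\<bar> * (\<integral>\<^sup>+u. ennreal (exp (-s)) * indicator {0..s} (s + -s * u) * h (s - (s + -s * u)) (s + -s * u) \<partial>lborel)"
        using True by (intro nn_integral_real_affine) (auto intro!: measurable_compose[OF _ borel_measurable_indicator])
      also have "\<dots> = ennreal s * (\<integral>\<^sup>+u. ennreal (exp (-s)) * (h (u * s) ((1 - u) * s) * indicator {0..1} u) \<partial>lborel)"
        using True
        by (auto intro!: nn_integral_cong arg_cong2[where f="(*)"] simp: indicator_def algebra_simps zero_le_mult_iff
            mult_le_cancel_left1)
      also have "\<dots> = ennreal (s * exp (-s)) * indicator {0<..} s * (\<integral>\<^sup>+u. h (u * s) ((1 - u) * s) \<partial>unif01)"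
        using True by (subst nn_integral_cmult) (auto simp: unif01_nn ennreal_mult mult.assoc)
      finally show ?thesis .
    next
      case False
      have "AE b in lborel. b \<noteq> 0" by (rule AE_lborel_singleton)
      then have "(\<integral>\<^sup>+b. ennreal (exp (-s)) * indicator {0..s} b * h (s - b) b \<partial>lborel) = (\<integral>\<^sup>+b. 0 \<partial>(lborel::real measure))"
        apply -
        apply (rule nn_integral_cong_AE)
        using False by (auto elim!: eventually_mono simp: indicator_def)
      then show ?thesis using False by simp
    qed
  qed
  finally show ?thesis .
qed

lemma pf_ul: "pair_sigma_finite unif01 lborel"
proof -
  interpret prob_space unif01 by (rule prob_unif01)
  show ?thesis by unfold_locales
qed

lemma core3:
  fixes h :: "real \<Rightarrow> real \<Rightarrow> real \<Rightarrow> ennreal"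
  assumes hm: "(\<lambda>x. h (fst x) (fst (snd x)) (snd (snd x))) \<in> borel_measurable (borel \<Otimes>\<^sub>M borel \<Otimes>\<^sub>M borel)"
  shows "(\<integral>\<^sup>+a. \<integral>\<^sup>+b. \<integral>\<^sup>+u. h (u * (a + b)) ((1 - u) * (a + b)) (a / (a + b)) \<partial>unif01 \<partial>expo1 \<partial>expo1) =
    (\<integral>\<^sup>+v. \<integral>\<^sup>+a. \<integral>\<^sup>+b. h a b v \<partial>expo1 \<partial>expo1 \<partial>unif01)"
proof -
  have hm3[measurable]: "(\<lambda>x. h (f x) (g x) (k x)) \<in> borel_measurable M"
    if [measurable]: "f \<in> borel_measurable M" "g \<in> borel_measurable M" "k \<in> borel_measurable M"
    for f g k and M :: "'x measure"
    using measurable_compose[OF measurable_Pair[OF that(1) measurable_Pair[OF that(2,3)]] hm] by simp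
  have "(\<integral>\<^sup>+a. \<integral>\<^sup>+b. \<integral>\<^sup>+u. h (u * (a + b)) ((1 - u) * (a + b)) (a / (a + b)) \<partial>unif01 \<partial>expo1 \<partial>expo1) =
     (\<integral>\<^sup>+s. ennreal (s * exp (-s)) * indicator {0<..} s *
        (\<integral>\<^sup>+v. \<integral>\<^sup>+u. h (u * (v * s + (1 - v) * s)) ((1 - u) * (v * s + (1 - v) * s)) (v * s / (v * s + (1 - v) * s)) \<partial>unif01 \<partial>unif01) \<partial>lborel)"
    by (rule L2) measurable
  also have "\<dots> = (\<integral>\<^sup>+s. ennreal (s * exp (-s)) * indicator {0<..} s *
        (\<integral>\<^sup>+v. \<integral>\<^sup>+u. h (u * s) ((1 - u) * s) v \<partial>unif01 \<partial>unif01) \<partial>lborel)"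
  proof (rule nn_integral_cong)
    fix s :: real
    show "ennreal (s * exp (-s)) * indicator {0<..} s *
        (\<integral>\<^sup>+v. \<integral>\<^sup>+u. h (u * (v * s + (1 - v) * s)) ((1 - u) * (v * s + (1 - v) * s)) (v * s / (v * s + (1 - v) * s)) \<partial>unif01 \<partial>unif01) =
       ennreal (s * exp (-s)) * indicator {0<..} s *
        (\<integral>\<^sup>+v. \<integral>\<^sup>+u. h (u * s) ((1 - u) * s) v \<partial>unif01 \<partial>unif01)"
    proof (cases "s > 0")
      case True
      then have "v * s + (1 - v) * s = s" "v * s / s = v" for v by (auto simp: algebra_simps)
      then show ?thesis by simp
    qed simp
  qed
  also have "\<dots> = (\<integral>\<^sup>+v. \<integral>\<^sup>+s. ennreal (s * exp (-s)) * indicator {0<..} s *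
        (\<integral>\<^sup>+u. h (u * s) ((1 - u) * s) v \<partial>unif01) \<partial>lborel \<partial>unif01)"
  proof -
    have "(\<integral>\<^sup>+s. ennreal (s * exp (-s)) * indicator {0<..} s *
        (\<integral>\<^sup>+v. \<integral>\<^sup>+u. h (u * s) ((1 - u) * s) v \<partial>unif01 \<partial>unif01) \<partial>lborel) =
      (\<integral>\<^sup>+s. \<integral>\<^sup>+v. ennreal (s * exp (-s)) * indicator {0<..} s *
        (\<integral>\<^sup>+u. h (u * s) ((1 - u) * s) v \<partial>unif01) \<partial>unif01 \<partial>lborel)"
      by (intro nn_integral_cong nn_integral_cmult[symmetric]) measurable
    also have "\<dots> = (\<integral>\<^sup>+v. \<integral>\<^sup>+s. ennreal (s * exp (-s)) * indicator {0<..} s *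
        (\<integral>\<^sup>+u. h (u * s) ((1 - u) * s) v \<partial>unif01) \<partial>lborel \<partial>unif01)"
      by (rule pair_sigma_finite.Fubini'[OF pf_ul]) measurable
    finally show ?thesis .
  qed
  also have "\<dots> = (\<integral>\<^sup>+v. \<integral>\<^sup>+a. \<integral>\<^sup>+b. h a b v \<partial>expo1 \<partial>expo1 \<partial>unif01)"
    by (intro nn_integral_cong L2[symmetric]) measurable
  finally show ?thesis .
qed


lemma meas_upd':
  assumes f: "f \<in> M \<rightarrow>\<^sub>M PiM J N" and k: "k \<in> M \<rightarrow>\<^sub>M N i"
  shows "(\<lambda>w. (f w)(i := k w)) \<in> M \<rightarrow>\<^sub>M PiM (insert i J) N"
proof -
  have "(\<lambda>w l. if l = i then k w else f w l) \<in> M \<rightarrow>\<^sub>M PiM (insert i J) N"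
  proof (rule measurable_PiM_single')
    fix l assume l: "l \<in> insert i J"
    show "(\<lambda>w. if l = i then k w else f w l) \<in> M \<rightarrow>\<^sub>M N l"
    proof (cases "l = i")
      case True then show ?thesis using k by simp
    next
      case False
      then have l: "l \<in> J" using l by auto
      have "(\<lambda>w. f w l) \<in> M \<rightarrow>\<^sub>M N l"
        using measurable_compose[OF f measurable_component_singleton[OF l]] .
      then show ?thesis using False by simp
    qed
  next
    show "(\<lambda>w l. if l = i then k w else f w l) \<in> space M \<rightarrow> (\<Pi>\<^sub>E l\<in>insert i J. space (N l))"
      using measurable_space[OF f] measurable_space[OF k]
      by (auto simp: space_PiM PiE_def Pi_iff extensional_def)
  qed
  then show ?thesis by (simp add: fun_upd_def[abs_def])
qed

lemma meas_upd:
  assumes f: "f \<in> M \<rightarrow>\<^sub>M PiM I N" and k: "k \<in> M \<rightarrow>\<^sub>M N i" and i: "i \<in> I"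
  shows "(\<lambda>w. (f w)(i := k w)) \<in> M \<rightarrow>\<^sub>M PiM I N"
  using meas_upd'[OF f k] i by (simp add: insert_absorb)

lemma sets_muX[measurable_cong]: "sets (muX V B) = sets (SX V B)"
  unfolding muX_def SX_def by (intro sets_PiM_cong) auto

lemma space_muX: "space (muX V B) = space (SX V B)"
  using sets_eq_imp_space_eq[OF sets_muX] .

lemma ps_E: "product_sigma_finite (\<lambda>_. expo1)"
  unfolding product_sigma_finite_def using E1.sigma_finite_measure_axioms by simp

lemma prob_PiE: "finite I \<Longrightarrow> prob_space (PiM I (\<lambda>_. expo1))"
proof -
  assume I: "finite I"
  interpret product_prob_space "\<lambda>_. expo1" I
    by (simp add: product_prob_space_def product_prob_space_axioms_def ps_E prob_expo1)
  show ?thesis by (rule P.prob_space_axioms)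
qed

lemma muX_split2:
  assumes I: "finite I" and ij: "i \<noteq> j" "i \<in> I" "j \<in> I"
    and F[measurable]: "F \<in> borel_measurable (PiM I (\<lambda>_. expo1))"
  shows "(\<integral>\<^sup>+x. F x \<partial>PiM I (\<lambda>_. expo1)) =
    (\<integral>\<^sup>+x. \<integral>\<^sup>+a. \<integral>\<^sup>+b. F (x(i := a, j := b)) \<partial>expo1 \<partial>expo1 \<partial>PiM (I - {i, j}) (\<lambda>_. expo1))"
proof -
  let ?R = "I - {i, j}"
  have I1: "I = insert j (insert i ?R)" using ij by auto
  have F1: "F \<in> borel_measurable (PiM (insert j (insert i ?R)) (\<lambda>_. expo1))" using F I1 by simp
  have "(\<integral>\<^sup>+x. F x \<partial>PiM I (\<lambda>_. expo1)) = (\<integral>\<^sup>+x. F x \<partial>PiM (insert j (insert i ?R)) (\<lambda>_. expo1))"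
    using I1 by simp
  also have "\<dots> = (\<integral>\<^sup>+x. \<integral>\<^sup>+b. F (x(j := b)) \<partial>expo1 \<partial>PiM (insert i ?R) (\<lambda>_. expo1))"
    by (rule product_sigma_finite.product_nn_integral_insert[OF ps_E]) (use I ij F1 in auto)
  also have "\<dots> = (\<integral>\<^sup>+x. \<integral>\<^sup>+a. \<integral>\<^sup>+b. F (x(i := a, j := b)) \<partial>expo1 \<partial>expo1 \<partial>PiM ?R (\<lambda>_. expo1))"
  proof (rule product_sigma_finite.product_nn_integral_insert[OF ps_E])
    show "finite ?R" "i \<notin> ?R" using I by auto
    have m: "(\<lambda>w. (fst w)(j := snd w)) \<in> PiM (insert i ?R) (\<lambda>_. expo1) \<Otimes>\<^sub>M expo1 \<rightarrow>\<^sub>M PiM I (\<lambda>_. expo1)"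
      using meas_upd'[where f=fst and k=snd and M="PiM (insert i ?R) (\<lambda>_. expo1) \<Otimes>\<^sub>M expo1"
          and J="insert i ?R" and N="\<lambda>_. expo1" and i=j] I1 by simp
    show "(\<lambda>x. \<integral>\<^sup>+b. F (x(j := b)) \<partial>expo1) \<in> borel_measurable (PiM (insert i ?R) (\<lambda>_. expo1))"
      by (rule E1.borel_measurable_nn_integral) (use measurable_compose[OF m F] in \<open>simp add: split_beta'\<close>)
  qed
  finally show ?thesis .
qed


lemma H_bulk_alt: "H_bulk i j u xs = ((fst xs)(i := u * (fst xs i + fst xs j), j := (1 - u) * (fst xs i + fst xs j)),
   (snd xs)(i := Tbar (fst xs) (snd xs) i j, j := Tbar (fst xs) (snd xs) i j))"
  by (cases xs) (simp add: H_bulk_def)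

lemma H_bdry_alt: "H_bdry i j b u xs = ((fst xs)(i := u * (fst xs i + fst xs j), j := b),
   (snd xs)(i := Tbar (fst xs) (snd xs) i j))"
  by (cases xs) (simp add: H_bdry_def)

lemma comp_SX:
  assumes f: "f \<in> M \<rightarrow>\<^sub>M SX V B" and l: "l \<in> V \<union> B"
  shows "(\<lambda>w. f w l) \<in> borel_measurable M"
  using measurable_compose[OF f[unfolded SX_def] measurable_component_singleton[OF l]] by simp

lemma upd_SX: "f \<in> M \<rightarrow>\<^sub>M SX V B \<Longrightarrow> k \<in> borel_measurable M \<Longrightarrow> l \<in> V \<union> B \<Longrightarrow>
   (\<lambda>w. (f w)(l := k w)) \<in> M \<rightarrow>\<^sub>M SX V B"
  unfolding SX_def by (rule meas_upd) auto

lemma Tbar_meas: "f \<in> M \<rightarrow>\<^sub>M SX V B \<Longrightarrow> g \<in> M \<rightarrow>\<^sub>M SX V B \<Longrightarrow> i \<in> V \<union> B \<Longrightarrow> j \<in> V \<union> B \<Longrightarrow>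
   (\<lambda>w. Tbar (f w) (g w) i j) \<in> borel_measurable M"
proof -
  assume f: "f \<in> M \<rightarrow>\<^sub>M SX V B" and g: "g \<in> M \<rightarrow>\<^sub>M SX V B" and ij: "i \<in> V \<union> B" "j \<in> V \<union> B"
  have fi: "(\<lambda>w. f w i) \<in> borel_measurable M" by (rule comp_SX[OF f ij(1)])
  have fj: "(\<lambda>w. f w j) \<in> borel_measurable M" by (rule comp_SX[OF f ij(2)])
  have gi: "(\<lambda>w. g w i) \<in> borel_measurable M" by (rule comp_SX[OF g ij(1)])
  have gj: "(\<lambda>w. g w j) \<in> borel_measurable M" by (rule comp_SX[OF g ij(2)])
  have sm: "(\<lambda>w. f w i + f w j) \<in> borel_measurable M" by (rule borel_measurable_add[OF fi fj])
  show ?thesis unfolding Tbar_def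
    by (rule borel_measurable_add[OF borel_measurable_times[OF borel_measurable_divide[OF fi sm] gi]
          borel_measurable_times[OF borel_measurable_divide[OF fj sm] gj]])
qed

lemma meas_H_bulk:
  assumes ij: "i \<in> V \<union> B" "j \<in> V \<union> B"
  shows "(\<lambda>w. H_bulk i j (snd w) (fst w)) \<in> SXT V B \<Otimes>\<^sub>M borel \<rightarrow>\<^sub>M SXT V B"
proof -
  let ?M = "(SX V B \<Otimes>\<^sub>M SX V B) \<Otimes>\<^sub>M (borel :: real measure)"
  have f: "(\<lambda>w. fst (fst w)) \<in> ?M \<rightarrow>\<^sub>M SX V B"
    and s: "(\<lambda>w. snd (fst w)) \<in> ?M \<rightarrow>\<^sub>M SX V B"
    by measurable
  have u: "snd \<in> borel_measurable ?M" by measurable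
  have fi: "(\<lambda>w. fst (fst w) i) \<in> borel_measurable ?M" by (rule comp_SX[OF f ij(1)])
  have fj: "(\<lambda>w. fst (fst w) j) \<in> borel_measurable ?M" by (rule comp_SX[OF f ij(2)])
  have sm: "(\<lambda>w. fst (fst w) i + fst (fst w) j) \<in> borel_measurable ?M" by (rule borel_measurable_add[OF fi fj])
  have k1: "(\<lambda>w. snd w * (fst (fst w) i + fst (fst w) j)) \<in> borel_measurable ?M"
    by (rule borel_measurable_times[OF u sm])
  have k2: "(\<lambda>w. (1 - snd w) * (fst (fst w) i + fst (fst w) j)) \<in> borel_measurable ?M"
    by (rule borel_measurable_times[OF borel_measurable_diff[OF borel_measurable_const u] sm])
  have X1: "(\<lambda>w. (fst (fst w))(i := snd w * (fst (fst w) i + fst (fst w) j))) \<in> ?M \<rightarrow>\<^sub>M SX V B"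
    by (rule upd_SX[OF f k1 ij(1)])
  have X2: "(\<lambda>w. (fst (fst w))(i := snd w * (fst (fst w) i + fst (fst w) j),
        j := (1 - snd w) * (fst (fst w) i + fst (fst w) j))) \<in> ?M \<rightarrow>\<^sub>M SX V B"
    by (rule upd_SX[OF X1 k2 ij(2)])
  have T: "(\<lambda>w. Tbar (fst (fst w)) (snd (fst w)) i j) \<in> borel_measurable ?M"
    by (rule Tbar_meas[OF f s ij])
  have S1: "(\<lambda>w. (snd (fst w))(i := Tbar (fst (fst w)) (snd (fst w)) i j)) \<in> ?M \<rightarrow>\<^sub>M SX V B"
    by (rule upd_SX[OF s T ij(1)])
  have S2: "(\<lambda>w. (snd (fst w))(i := Tbar (fst (fst w)) (snd (fst w)) i j,
       j := Tbar (fst (fst w)) (snd (fst w)) i j)) \<in> ?M \<rightarrow>\<^sub>M SX V B"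
    by (rule upd_SX[OF S1 T ij(2)])
  show ?thesis unfolding H_bulk_alt SXT_def by (rule measurable_Pair[OF X2 S2])
qed

lemma meas_H_bdry:
  assumes ij: "i \<in> V \<union> B" "j \<in> V \<union> B"
  shows "(\<lambda>w. H_bdry i j (fst (snd w)) (snd (snd w)) (fst w)) \<in> SXT V B \<Otimes>\<^sub>M (borel \<Otimes>\<^sub>M borel) \<rightarrow>\<^sub>M SXT V B"
proof -
  let ?M = "(SX V B \<Otimes>\<^sub>M SX V B) \<Otimes>\<^sub>M ((borel :: real measure) \<Otimes>\<^sub>M (borel :: real measure))"
  have f: "(\<lambda>w. fst (fst w)) \<in> ?M \<rightarrow>\<^sub>M SX V B"
    and s: "(\<lambda>w. snd (fst w)) \<in> ?M \<rightarrow>\<^sub>M SX V B"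
    by measurable
  have u: "(\<lambda>w. snd (snd w)) \<in> borel_measurable ?M"
   and b: "(\<lambda>w. fst (snd w)) \<in> borel_measurable ?M"
    by measurable
  have fi: "(\<lambda>w. fst (fst w) i) \<in> borel_measurable ?M" by (rule comp_SX[OF f ij(1)])
  have fj: "(\<lambda>w. fst (fst w) j) \<in> borel_measurable ?M" by (rule comp_SX[OF f ij(2)])
  have sm: "(\<lambda>w. fst (fst w) i + fst (fst w) j) \<in> borel_measurable ?M" by (rule borel_measurable_add[OF fi fj])
  have k1: "(\<lambda>w. snd (snd w) * (fst (fst w) i + fst (fst w) j)) \<in> borel_measurable ?M"
    by (rule borel_measurable_times[OF u sm])
  have X1: "(\<lambda>w. (fst (fst w))(i := snd (snd w) * (fst (fst w) i + fst (fst w) j))) \<in> ?M \<rightarrow>\<^sub>M SX V B"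
    by (rule upd_SX[OF f k1 ij(1)])
  have X2: "(\<lambda>w. (fst (fst w))(i := snd (snd w) * (fst (fst w) i + fst (fst w) j),
        j := fst (snd w))) \<in> ?M \<rightarrow>\<^sub>M SX V B"
    by (rule upd_SX[OF X1 b ij(2)])
  have T: "(\<lambda>w. Tbar (fst (fst w)) (snd (fst w)) i j) \<in> borel_measurable ?M"
    by (rule Tbar_meas[OF f s ij])
  have S1: "(\<lambda>w. (snd (fst w))(i := Tbar (fst (fst w)) (snd (fst w)) i j)) \<in> ?M \<rightarrow>\<^sub>M SX V B"
    by (rule upd_SX[OF s T ij(1)])
  show ?thesis unfolding H_bdry_alt SXT_def by (rule measurable_Pair[OF X2 S1])
qed

lemma meas_H_op:
  assumes "i \<in> V \<union> B" "j \<in> V \<union> B"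
  shows "(\<lambda>w. H_op V i j (snd w) (fst w)) \<in> SX V B \<Otimes>\<^sub>M borel \<rightarrow>\<^sub>M SX V B"
proof -
  have s: "fst \<in> SX V B \<Otimes>\<^sub>M borel \<rightarrow>\<^sub>M SX V B" by measurable
  have u: "snd \<in> borel_measurable (SX V B \<Otimes>\<^sub>M borel)" by measurable
  have "(\<lambda>w l. if l \<in> {i, j} \<inter> V then snd w * fst w i + (1 - snd w) * fst w j else fst w l)
      \<in> SX V B \<Otimes>\<^sub>M borel \<rightarrow>\<^sub>M PiM (V \<union> B) (\<lambda>_. borel)"
  proof (rule measurable_PiM_single')
    fix l assume l: "l \<in> V \<union> B"
    show "(\<lambda>w. if l \<in> {i, j} \<inter> V then snd w * fst w i + (1 - snd w) * fst w j else fst w l)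
      \<in> borel_measurable (SX V B \<Otimes>\<^sub>M borel)"
    proof -
      have m1: "(\<lambda>w. snd w * fst w i + (1 - snd w) * fst w j) \<in> borel_measurable (SX V B \<Otimes>\<^sub>M borel)"
      proof -
        have a: "(\<lambda>w. fst w i) \<in> borel_measurable (SX V B \<Otimes>\<^sub>M borel)" by (rule comp_SX[OF s assms(1)])
        have b: "(\<lambda>w. fst w j) \<in> borel_measurable (SX V B \<Otimes>\<^sub>M borel)" by (rule comp_SX[OF s assms(2)])
        show ?thesis
          by (rule borel_measurable_add[OF borel_measurable_times[OF u a]
              borel_measurable_times[OF borel_measurable_diff[OF borel_measurable_const u] b]])
      qed
      have m2: "(\<lambda>w. fst w l) \<in> borel_measurable (SX V B \<Otimes>\<^sub>M borel)" by (rule comp_SX[OF s l])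
      show ?thesis
      proof (cases "l \<in> {i, j} \<inter> V")
        case True then show ?thesis using m1 by (simp only: if_P[OF True] if_True)
      next
        case False then show ?thesis using m2 by (simp only: if_not_P[OF False] if_False)
      qed
    qed
  next
    show "(\<lambda>w l. if l \<in> {i, j} \<inter> V then snd w * fst w i + (1 - snd w) * fst w j else fst w l)
      \<in> space (SX V B \<Otimes>\<^sub>M borel) \<rightarrow> (\<Pi>\<^sub>E l\<in>V \<union> B. space borel)"
      by (auto simp: space_pair_measure SX_def space_PiM PiE_def extensional_def)
  qed
  then show ?thesis unfolding H_op_def SX_def .
qed


definition Sg :: "('v \<times> 'v) set \<Rightarrow> ('v \<times> 'v) option set" where
  "Sg Ebar = insert None (Some ` Ebar)"

lemma graph_fin: "graph_ok V B Ebar \<Longrightarrow> finite Ebar"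
  unfolding graph_ok_def by (meson finite_SigmaI finite_UnI finite_subset)

lemma Sg_fin: "graph_ok V B Ebar \<Longrightarrow> finite (Sg Ebar)"
  using graph_fin by (auto simp: Sg_def)

lemma Sg_ne: "Sg Ebar \<noteq> {}"
  by (auto simp: Sg_def)

lemma graph_ij: "graph_ok V B Ebar \<Longrightarrow> (i, j) \<in> Ebar \<Longrightarrow> i \<in> V \<and> j \<in> V \<union> B \<and> i \<noteq> j \<and> i \<notin> B"
  unfolding graph_ok_def by blast

lemma subprob_distr_any:
  assumes M: "prob_space M" and N: "space N \<noteq> {}"
  shows "subprob_space (distr M N f)"
proof (rule subprob_spaceI)
  have "emeasure M (f -` space N \<inter> space M) \<le> 1"
    using emeasure_space[of M] prob_space.emeasure_space_1[OF M] by simp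
  then show "emeasure (distr M N f) (space (distr M N f)) \<le> 1"
    by (simp add: distr_def emeasure_measure_of_conv space_measure_of_conv)
  show "space (distr M N f) \<noteq> {}" using N by simp
qed

lemma space_SX_ne: "space (SX V B) \<noteq> {}"
  by (simp add: SX_def space_PiM PiE_eq_empty_iff)

lemma space_SXT_ne: "space (SXT V B) \<noteq> {}"
  using space_SX_ne by (simp add: SXT_def space_pair_measure)

lemma prob_EU: "prob_space (expo1 \<Otimes>\<^sub>M unif01)"
proof -
  interpret pair_prob_space expo1 unif01 by unfold_locales
  show ?thesis by (rule P.prob_space_axioms)
qed

definition EXT :: "'v set \<Rightarrow> (('v \<Rightarrow> real) \<times> ('v \<Rightarrow> real) \<Rightarrow> ennreal) \<Rightarrow> ('v \<Rightarrow> real) \<times> ('v \<Rightarrow> real) \<Rightarrow> 'v \<times> 'v \<Rightarrow> ennreal" where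
  "EXT B g xs e = (case e of (i, j) \<Rightarrow> if j \<in> B
     then \<integral>\<^sup>+w. g (case w of (b, u) \<Rightarrow> H_bdry i j b u xs) \<partial>(expo1 \<Otimes>\<^sub>M unif01)
     else \<integral>\<^sup>+u. g (H_bulk i j u xs) \<partial>unif01)"

definition EO :: "'v set \<Rightarrow> (('v \<Rightarrow> real) \<Rightarrow> ennreal) \<Rightarrow> ('v \<Rightarrow> real) \<Rightarrow> 'v \<times> 'v \<Rightarrow> ennreal" where
  "EO V g s e = (case e of (i, j) \<Rightarrow> \<integral>\<^sup>+v. g (H_op V i j v s) \<partial>unif01)"

lemma H_bulk_m1:
  assumes xs: "xs \<in> space (SXT V B)" and ij: "i \<in> V \<union> B" "j \<in> V \<union> B"
  shows "(\<lambda>u. H_bulk i j u xs) \<in> unif01 \<rightarrow>\<^sub>M SXT V B"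
  using measurable_compose[OF measurable_Pair[OF measurable_const[OF xs, of unif01]
      measurable_ident_sets[OF sets_unif01]] meas_H_bulk[OF ij]] by simp

lemma H_bdry_m1:
  assumes xs: "xs \<in> space (SXT V B)" and ij: "i \<in> V \<union> B" "j \<in> V \<union> B"
  shows "(\<lambda>w. case w of (b, u) \<Rightarrow> H_bdry i j b u xs) \<in> expo1 \<Otimes>\<^sub>M unif01 \<rightarrow>\<^sub>M SXT V B"
  using measurable_compose[OF measurable_Pair[OF measurable_const[OF xs, of "expo1 \<Otimes>\<^sub>M unif01"]
      measurable_ident_sets[OF sets_pair_measure_cong[OF sets_expo1 sets_unif01]]] meas_H_bdry[OF ij]]
  by (simp add: split_beta')

lemma H_op_m1:
  assumes s: "s \<in> space (SX V B)" and ij: "i \<in> V \<union> B" "j \<in> V \<union> B"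
  shows "(\<lambda>v. H_op V i j v s) \<in> unif01 \<rightarrow>\<^sub>M SX V B"
  using measurable_compose[OF measurable_Pair[OF measurable_const[OF s, of unif01]
      measurable_ident_sets[OF sets_unif01]] meas_H_op[OF ij]] by simp

lemma meas_distr_cong: "g \<in> borel_measurable N \<Longrightarrow> g \<in> borel_measurable (distr M N f)"
  by (subst measurable_cong_sets[OF sets_distr refl])

lemma K_XT_nn:
  assumes G: "graph_ok V B Ebar" and xs: "xs \<in> space (SXT V B)" and g: "g \<in> borel_measurable (SXT V B)"
  shows "(\<integral>\<^sup>+z. g z \<partial>K_XT V B Ebar xs) = (g xs + (\<Sum>e\<in>Ebar. EXT B g xs e)) / card (Sg Ebar)"
proof -
  note fin = graph_fin[OF G]
  let ?F = "\<lambda>oe. case oe of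
        None \<Rightarrow> return (SXT V B) xs
      | Some (i, j) \<Rightarrow>
          (if j \<in> B then distr (expo1 \<Otimes>\<^sub>M unif01) (SXT V B) (\<lambda>(b, u). H_bdry i j b u xs)
           else distr unif01 (SXT V B) (\<lambda>u. H_bulk i j u xs))"
  have Fm: "?F \<in> measure_pmf (pmf_of_set (Sg Ebar)) \<rightarrow>\<^sub>M subprob_algebra (SXT V B)"
    using xs by (auto simp: space_subprob_algebra Pi_iff split: option.split
        intro!: subprob_distr_any subprob_space_return prob_EU prob_unif01 space_SXT_ne)
  have "(\<integral>\<^sup>+z. g z \<partial>K_XT V B Ebar xs) = (\<integral>\<^sup>+oe. \<integral>\<^sup>+z. g z \<partial>?F oe \<partial>measure_pmf (pmf_of_set (Sg Ebar)))"
    unfolding K_XT_def Sg_def[symmetric] by (rule nn_integral_bind[OF g Fm])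
  also have "\<dots> = (\<Sum>oe\<in>Sg Ebar. \<integral>\<^sup>+z. g z \<partial>?F oe) / card (Sg Ebar)"
    by (rule nn_integral_pmf_of_set) (use Sg_fin[OF G] Sg_ne in auto)
  also have "(\<Sum>oe\<in>Sg Ebar. \<integral>\<^sup>+z. g z \<partial>?F oe) = g xs + (\<Sum>e\<in>Ebar. EXT B g xs e)"
  proof -
    have "(\<Sum>oe\<in>Sg Ebar. \<integral>\<^sup>+z. g z \<partial>?F oe) = (\<integral>\<^sup>+z. g z \<partial>?F None) + (\<Sum>e\<in>Ebar. \<integral>\<^sup>+z. g z \<partial>?F (Some e))"
      unfolding Sg_def using fin by (subst sum.insert) (auto simp: sum.reindex)
    also have "(\<integral>\<^sup>+z. g z \<partial>?F None) = g xs"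
      using xs g by (simp add: nn_integral_return)
    also have "(\<Sum>e\<in>Ebar. \<integral>\<^sup>+z. g z \<partial>?F (Some e)) = (\<Sum>e\<in>Ebar. EXT B g xs e)"
    proof (rule sum.cong)
      fix e assume e: "e \<in> Ebar"
      obtain i j where e': "e = (i, j)" by (cases e)
      have ij: "i \<in> V \<union> B" "j \<in> V \<union> B" using graph_ij[OF G e[unfolded e']] by auto
      show "(\<integral>\<^sup>+z. g z \<partial>?F (Some e)) = EXT B g xs e"
        unfolding e' EXT_def
        using nn_integral_distr[OF H_bdry_m1[OF xs ij] meas_distr_cong[OF g]] nn_integral_distr[OF H_bulk_m1[OF xs ij] meas_distr_cong[OF g]]
        by simp
    qed simp
    finally show ?thesis .
  qed
  finally show ?thesis .
qed

lemma K_O_nn: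
  assumes G: "graph_ok V B Ebar" and s: "s \<in> space (SX V B)" and g: "g \<in> borel_measurable (SX V B)"
  shows "(\<integral>\<^sup>+z. g z \<partial>K_O V B Ebar s) = (g s + (\<Sum>e\<in>Ebar. EO V g s e)) / card (Sg Ebar)"
proof -
  note fin = graph_fin[OF G]
  let ?F = "\<lambda>oe. case oe of
        None \<Rightarrow> return (SX V B) s
      | Some (i, j) \<Rightarrow> distr unif01 (SX V B) (\<lambda>v. H_op V i j v s)"
  have Fm: "?F \<in> measure_pmf (pmf_of_set (Sg Ebar)) \<rightarrow>\<^sub>M subprob_algebra (SX V B)"
    using s by (auto simp: space_subprob_algebra Pi_iff split: option.split
        intro!: subprob_distr_any subprob_space_return prob_unif01 space_SX_ne)
  have "(\<integral>\<^sup>+z. g z \<partial>K_O V B Ebar s) = (\<integral>\<^sup>+oe. \<integral>\<^sup>+z. g z \<partial>?F oe \<partial>measure_pmf (pmf_of_set (Sg Ebar)))"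
    unfolding K_O_def Sg_def[symmetric] by (rule nn_integral_bind[OF g Fm])
  also have "\<dots> = (\<Sum>oe\<in>Sg Ebar. \<integral>\<^sup>+z. g z \<partial>?F oe) / card (Sg Ebar)"
    by (rule nn_integral_pmf_of_set) (use Sg_fin[OF G] Sg_ne in auto)
  also have "(\<Sum>oe\<in>Sg Ebar. \<integral>\<^sup>+z. g z \<partial>?F oe) = g s + (\<Sum>e\<in>Ebar. EO V g s e)"
  proof -
    have "(\<Sum>oe\<in>Sg Ebar. \<integral>\<^sup>+z. g z \<partial>?F oe) = (\<integral>\<^sup>+z. g z \<partial>?F None) + (\<Sum>e\<in>Ebar. \<integral>\<^sup>+z. g z \<partial>?F (Some e))"
      unfolding Sg_def using fin by (subst sum.insert) (auto simp: sum.reindex)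
    also have "(\<integral>\<^sup>+z. g z \<partial>?F None) = g s"
      using s g by (simp add: nn_integral_return)
    also have "(\<Sum>e\<in>Ebar. \<integral>\<^sup>+z. g z \<partial>?F (Some e)) = (\<Sum>e\<in>Ebar. EO V g s e)"
    proof (rule sum.cong)
      fix e assume e: "e \<in> Ebar"
      obtain i j where e': "e = (i, j)" by (cases e)
      have ij: "i \<in> V \<union> B" "j \<in> V \<union> B" using graph_ij[OF G e[unfolded e']] by auto
      show "(\<integral>\<^sup>+z. g z \<partial>?F (Some e)) = EO V g s e"
        unfolding e' EO_def
        using nn_integral_distr[OF H_op_m1[OF s ij] meas_distr_cong[OF g]] by simp
    qed simp
    finally show ?thesis .
  qed
  finally show ?thesis .
qed


lemma psf_UE: "pair_sigma_finite unif01 expo1"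
  by (simp add: pair_sigma_finite_def U01.sigma_finite_measure_axioms E1.sigma_finite_measure_axioms)
lemma psf_EU: "pair_sigma_finite expo1 unif01"
  by (simp add: pair_sigma_finite_def U01.sigma_finite_measure_axioms E1.sigma_finite_measure_axioms)

lemma core3':
  fixes h :: "real \<Rightarrow> real \<Rightarrow> real \<Rightarrow> ennreal"
  assumes hm: "(\<lambda>x. h (fst x) (fst (snd x)) (snd (snd x))) \<in> borel_measurable (borel \<Otimes>\<^sub>M borel \<Otimes>\<^sub>M borel)"
  shows "(\<integral>\<^sup>+a. \<integral>\<^sup>+b. \<integral>\<^sup>+u. h (u * (a + b)) ((1 - u) * (a + b)) (a / (a + b)) \<partial>unif01 \<partial>expo1 \<partial>expo1) =
    (\<integral>\<^sup>+a. \<integral>\<^sup>+b. \<integral>\<^sup>+v. h a b v \<partial>unif01 \<partial>expo1 \<partial>expo1)"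
proof -
  have hm3[measurable]: "(\<lambda>x. h (f x) (g x) (k x)) \<in> borel_measurable M"
    if [measurable]: "f \<in> borel_measurable M" "g \<in> borel_measurable M" "k \<in> borel_measurable M"
    for f g k and M :: "'x measure"
    using measurable_compose[OF measurable_Pair[OF that(1) measurable_Pair[OF that(2,3)]] hm] by simp
  have "(\<integral>\<^sup>+v. \<integral>\<^sup>+a. \<integral>\<^sup>+b. h a b v \<partial>expo1 \<partial>expo1 \<partial>unif01) = (\<integral>\<^sup>+a. \<integral>\<^sup>+v. \<integral>\<^sup>+b. h a b v \<partial>expo1 \<partial>unif01 \<partial>expo1)"
    by (rule pair_sigma_finite.Fubini'[OF psf_UE, symmetric]) measurable
  also have "\<dots> = (\<integral>\<^sup>+a. \<integral>\<^sup>+b. \<integral>\<^sup>+v. h a b v \<partial>unif01 \<partial>expo1 \<partial>expo1)"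
    by (intro nn_integral_cong pair_sigma_finite.Fubini'[OF psf_UE, symmetric]) measurable
  finally show ?thesis using core3[OF hm] by simp
qed

lemma AE_expo1_pos: "AE a in expo1. 0 < a"
proof -
  have "AE x in lborel. 0 < ennreal (exponential_density 1 x) \<longrightarrow> 0 < x"
    using AE_lborel_singleton[of 0]
    by eventually_elim (auto simp: exponential_density_def split: if_splits)
  then show ?thesis
    unfolding expo1_def by (subst AE_density) auto
qed

lemma gcomp:
  assumes g: "g \<in> borel_measurable (SXT V B)" and P: "P \<in> M \<rightarrow>\<^sub>M SX V B" and Q: "Q \<in> M \<rightarrow>\<^sub>M SX V B"
  shows "(\<lambda>t. g (P t, Q t)) \<in> borel_measurable M"
  using measurable_compose[OF measurable_Pair[OF P Q] g[unfolded SXT_def]] .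

lemma space_PiE1: "space (PiM R (\<lambda>_. expo1)) = space (PiM R (\<lambda>_. borel))"
  by (simp add: space_PiM expo1_def)

lemma upd2:
  assumes y: "y \<in> space (PiM (V \<union> B - {i, j}) (\<lambda>_. expo1))" and ij: "i \<in> V \<union> B" "j \<in> V \<union> B"
    and fa: "fa \<in> borel_measurable M" and fb: "fb \<in> borel_measurable M"
  shows "(\<lambda>t. y(i := fa t, j := fb t)) \<in> M \<rightarrow>\<^sub>M SX V B"
proof -
  have y': "y \<in> space (PiM (V \<union> B - {i, j}) (\<lambda>_. borel))" using y space_PiE1 by blast
  have "(\<lambda>t. y(i := fa t)) \<in> M \<rightarrow>\<^sub>M PiM (insert i (V \<union> B - {i, j})) (\<lambda>_. borel)"
    using meas_upd'[OF measurable_const[OF y'] fa] by simp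
  from meas_upd'[OF this fb]
  have "(\<lambda>t. y(i := fa t, j := fb t)) \<in> M \<rightarrow>\<^sub>M PiM (insert j (insert i (V \<union> B - {i, j}))) (\<lambda>_. borel)" by simp
  moreover have "insert j (insert i (V \<union> B - {i, j})) = V \<union> B" using ij by auto
  ultimately show ?thesis by (simp add: SX_def)
qed

lemma upd_s1:
  assumes s: "s \<in> space (SX V B)" and i: "i \<in> V \<union> B" and fc: "fc \<in> borel_measurable M"
  shows "(\<lambda>t. s(i := fc t)) \<in> M \<rightarrow>\<^sub>M SX V B"
  by (rule upd_SX[OF measurable_const[OF s] fc i])

lemma upd_s2:
  assumes s: "s \<in> space (SX V B)" and i: "i \<in> V \<union> B" "j \<in> V \<union> B" and fc: "fc \<in> borel_measurable M"
  shows "(\<lambda>t. s(i := fc t, j := fc t)) \<in> M \<rightarrow>\<^sub>M SX V B"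
  by (rule upd_SX[OF upd_s1[OF s i(1) fc] fc i(2)])

lemma sets_muX_pair: "sets M = sets M' \<Longrightarrow> sets (muX V B \<Otimes>\<^sub>M M) = sets (SX V B \<Otimes>\<^sub>M M')"
  by (intro sets_pair_measure_cong sets_muX)

lemma prob_muX: "finite (V \<union> B) \<Longrightarrow> prob_space (muX V B)"
  unfolding muX_def by (rule prob_PiE)

lemma H_op_bulk: "i \<in> V \<Longrightarrow> j \<in> V \<Longrightarrow>
  H_op V i j v s = s(i := v * s i + (1 - v) * s j, j := v * s i + (1 - v) * s j)"
  by (auto simp: H_op_def fun_eq_iff)

lemma H_op_bdry: "i \<in> V \<Longrightarrow> j \<notin> V \<Longrightarrow>
  H_op V i j v s = s(i := v * s i + (1 - v) * s j)"
  by (auto simp: H_op_def fun_eq_iff)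

lemma HB_pt:
  assumes "i \<noteq> j" "a + b \<noteq> 0"
  shows "H_bulk i j u (y(i := a, j := b), s) = (y(i := u * (a + b), j := (1 - u) * (a + b)),
     s(i := (a / (a + b)) * s i + (1 - a / (a + b)) * s j, j := (a / (a + b)) * s i + (1 - a / (a + b)) * s j))"
proof -
  have "b / (a + b) = 1 - a / (a + b)" using assms by (simp add: field_simps)
  then show ?thesis using assms by (simp add: H_bulk_alt Tbar_def fun_eq_iff)
qed

lemma HD_pt:
  assumes "i \<noteq> j" "a + b \<noteq> 0"
  shows "H_bdry i j c u (y(i := a, j := b), s) = (y(i := u * (a + b), j := c),
     s(i := (a / (a + b)) * s i + (1 - a / (a + b)) * s j))"
proof -
  have "b / (a + b) = 1 - a / (a + b)" using assms by (simp add: field_simps)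
  then show ?thesis using assms by (simp add: H_bdry_alt Tbar_def fun_eq_iff)
qed

lemma phi_meas:
  assumes s: "s \<in> space (SX V B)"
  shows "(\<lambda>z. ((fst z, s), snd z)) \<in> muX V B \<Otimes>\<^sub>M M \<rightarrow>\<^sub>M SXT V B \<Otimes>\<^sub>M M"
proof -
  have "(\<lambda>z. ((fst z, s), snd z)) \<in> SX V B \<Otimes>\<^sub>M M \<rightarrow>\<^sub>M (SX V B \<Otimes>\<^sub>M SX V B) \<Otimes>\<^sub>M M"
    by (rule measurable_Pair[OF measurable_Pair[OF measurable_fst measurable_const[OF s]] measurable_snd])
  then show ?thesis
    by (simp add: SXT_def measurable_cong_sets[OF sets_muX_pair[OF refl] refl])
qed

lemma fst_muX: "fst \<in> muX V B \<Otimes>\<^sub>M M \<rightarrow>\<^sub>M SX V B"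
  by (simp add: measurable_cong_sets[OF sets_muX_pair[OF refl] refl])

lemma edge_bulk:
  assumes ij: "i \<in> V" "j \<in> V" "i \<noteq> j" and fin: "finite (V \<union> B)"
    and s: "s \<in> space (SX V B)" and g: "g \<in> borel_measurable (SXT V B)"
  shows "(\<integral>\<^sup>+x. (\<integral>\<^sup>+u. g (H_bulk i j u (x, s)) \<partial>unif01) \<partial>muX V B) =
    (\<integral>\<^sup>+v. (\<integral>\<^sup>+x. g (x, H_op V i j v s) \<partial>muX V B) \<partial>unif01)"
proof -
  define R where "R = V \<union> B - {i, j}"
  define w where "w v = v * s i + (1 - v) * s j" for v
  define F1 where "F1 x = (\<integral>\<^sup>+u. g (H_bulk i j u (x, s)) \<partial>unif01)" for x
  define F2 where "F2 x = (\<integral>\<^sup>+v. g (x, H_op V i j v s) \<partial>unif01)" for x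
  have IJ: "i \<in> V \<union> B" "j \<in> V \<union> B" using ij by auto
  interpret MX: prob_space "muX V B" by (rule prob_muX[OF fin])
  have psf: "pair_sigma_finite (muX V B) unif01"
    by (simp add: pair_sigma_finite_def U01.sigma_finite_measure_axioms MX.sigma_finite_measure_axioms)
  have j1: "(\<lambda>z. g (H_bulk i j (snd z) (fst z, s))) \<in> borel_measurable (muX V B \<Otimes>\<^sub>M unif01)"
  proof -
    have "(\<lambda>z. ((fst z, s), snd z)) \<in> muX V B \<Otimes>\<^sub>M unif01 \<rightarrow>\<^sub>M SXT V B \<Otimes>\<^sub>M borel"
      using phi_meas[OF s, of unif01] by (simp add: measurable_cong_sets[OF refl sets_pair_measure_cong[OF refl sets_unif01]])
    from measurable_compose[OF measurable_compose[OF this meas_H_bulk[OF IJ]] g] show ?thesis by simp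
  qed
  have j2: "(\<lambda>z. g (fst z, H_op V i j (snd z) s)) \<in> borel_measurable (muX V B \<Otimes>\<^sub>M unif01)"
  proof -
    have "(\<lambda>z. (s, snd z)) \<in> muX V B \<Otimes>\<^sub>M unif01 \<rightarrow>\<^sub>M SX V B \<Otimes>\<^sub>M borel"
      by (rule measurable_Pair[OF measurable_const[OF s]])
        (simp add: measurable_cong_sets[OF refl sets_unif01[symmetric]])
    from measurable_compose[OF this meas_H_op[OF IJ]]
    have "(\<lambda>z. H_op V i j (snd z) s) \<in> muX V B \<Otimes>\<^sub>M unif01 \<rightarrow>\<^sub>M SX V B" by simp
    from gcomp[OF g fst_muX this] show ?thesis .
  qed
  have F1m: "F1 \<in> borel_measurable (PiM (V \<union> B) (\<lambda>_. expo1))"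
    unfolding F1_def muX_def[symmetric]
    by (rule U01.borel_measurable_nn_integral) (use j1 in \<open>simp add: split_beta'\<close>)
  have F2m: "F2 \<in> borel_measurable (PiM (V \<union> B) (\<lambda>_. expo1))"
    unfolding F2_def muX_def[symmetric]
    by (rule U01.borel_measurable_nn_integral) (use j2 in \<open>simp add: split_beta'\<close>)
  have per_y: "(\<integral>\<^sup>+a. \<integral>\<^sup>+b. F1 (y(i := a, j := b)) \<partial>expo1 \<partial>expo1) = (\<integral>\<^sup>+a. \<integral>\<^sup>+b. F2 (y(i := a, j := b)) \<partial>expo1 \<partial>expo1)"
    if y: "y \<in> space (PiM R (\<lambda>_. expo1))" for y
  proof -
    define h where "h a b v = g (y(i := a, j := b), s(i := w v, j := w v))" for a b v
    have hm: "(\<lambda>x. h (fst x) (fst (snd x)) (snd (snd x))) \<in> borel_measurable (borel \<Otimes>\<^sub>M borel \<Otimes>\<^sub>M borel)"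
    proof -
      have wm: "(\<lambda>x. w (snd (snd x))) \<in> borel_measurable (borel \<Otimes>\<^sub>M borel \<Otimes>\<^sub>M (borel :: real measure))"
        unfolding w_def by measurable
      have P: "(\<lambda>x. y(i := fst x, j := fst (snd x))) \<in> (borel \<Otimes>\<^sub>M borel \<Otimes>\<^sub>M borel) \<rightarrow>\<^sub>M SX V B"
        by (rule upd2[OF y[unfolded R_def] IJ]) measurable
      have Q: "(\<lambda>x. s(i := w (snd (snd x)), j := w (snd (snd x)))) \<in> (borel \<Otimes>\<^sub>M borel \<Otimes>\<^sub>M borel) \<rightarrow>\<^sub>M SX V B"
        by (rule upd_s2[OF s IJ wm])
      show ?thesis unfolding h_def by (rule gcomp[OF g P Q])
    qed
    have "(\<integral>\<^sup>+a. \<integral>\<^sup>+b. F1 (y(i := a, j := b)) \<partial>expo1 \<partial>expo1) =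
       (\<integral>\<^sup>+a. \<integral>\<^sup>+b. \<integral>\<^sup>+u. h (u * (a + b)) ((1 - u) * (a + b)) (a / (a + b)) \<partial>unif01 \<partial>expo1 \<partial>expo1)"
    proof (rule nn_integral_cong_AE)
      show "AE a in expo1. (\<integral>\<^sup>+b. F1 (y(i := a, j := b)) \<partial>expo1) =
          (\<integral>\<^sup>+b. \<integral>\<^sup>+u. h (u * (a + b)) ((1 - u) * (a + b)) (a / (a + b)) \<partial>unif01 \<partial>expo1)"
        using AE_expo1_pos
      proof eventually_elim
        case (elim a)
        show ?case
        proof (rule nn_integral_cong_AE)
          show "AE b in expo1. F1 (y(i := a, j := b)) =
              (\<integral>\<^sup>+u. h (u * (a + b)) ((1 - u) * (a + b)) (a / (a + b)) \<partial>unif01)"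
            using AE_expo1_pos
          proof eventually_elim
            case (elim b)
            then have "a + b \<noteq> 0" using \<open>0 < a\<close> by simp
            then show ?case
              unfolding F1_def h_def w_def using ij(3) by (simp add: HB_pt)
          qed
        qed
      qed
    qed
    also have "\<dots> = (\<integral>\<^sup>+a. \<integral>\<^sup>+b. \<integral>\<^sup>+v. h a b v \<partial>unif01 \<partial>expo1 \<partial>expo1)"
      by (rule core3'[OF hm])
    also have "\<dots> = (\<integral>\<^sup>+a. \<integral>\<^sup>+b. F2 (y(i := a, j := b)) \<partial>expo1 \<partial>expo1)"
      unfolding F2_def h_def w_def using ij by (simp add: H_op_bulk)
    finally show ?thesis .
  qed
  have "(\<integral>\<^sup>+x. F1 x \<partial>muX V B) = (\<integral>\<^sup>+y. \<integral>\<^sup>+a. \<integral>\<^sup>+b. F1 (y(i := a, j := b)) \<partial>expo1 \<partial>expo1 \<partial>PiM R (\<lambda>_. expo1))"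
    unfolding muX_def R_def by (rule muX_split2[OF fin ij(3) IJ F1m])
  also have "\<dots> = (\<integral>\<^sup>+y. \<integral>\<^sup>+a. \<integral>\<^sup>+b. F2 (y(i := a, j := b)) \<partial>expo1 \<partial>expo1 \<partial>PiM R (\<lambda>_. expo1))"
    by (rule nn_integral_cong) (rule per_y)
  also have "\<dots> = (\<integral>\<^sup>+x. F2 x \<partial>muX V B)"
    unfolding muX_def R_def by (rule muX_split2[OF fin ij(3) IJ F2m, symmetric])
  also have "\<dots> = (\<integral>\<^sup>+v. (\<integral>\<^sup>+x. g (x, H_op V i j v s) \<partial>muX V B) \<partial>unif01)"
    unfolding F2_def by (rule pair_sigma_finite.Fubini'[OF psf, symmetric]) (use j2 in \<open>simp add: split_beta'\<close>)
  finally show ?thesis unfolding F1_def .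
qed

lemma edge_bdry:
  assumes ij: "i \<in> V" "j \<in> B" "i \<noteq> j" "j \<notin> V" and fin: "finite (V \<union> B)"
    and s: "s \<in> space (SX V B)" and g: "g \<in> borel_measurable (SXT V B)"
  shows "(\<integral>\<^sup>+x. (\<integral>\<^sup>+z. g (case z of (c, u) \<Rightarrow> H_bdry i j c u (x, s)) \<partial>(expo1 \<Otimes>\<^sub>M unif01)) \<partial>muX V B) =
    (\<integral>\<^sup>+v. (\<integral>\<^sup>+x. g (x, H_op V i j v s) \<partial>muX V B) \<partial>unif01)"
proof -
  define R where "R = V \<union> B - {i, j}"
  define w where "w v = v * s i + (1 - v) * s j" for v
  define F1 where "F1 x = (\<integral>\<^sup>+z. g (case z of (c, u) \<Rightarrow> H_bdry i j c u (x, s)) \<partial>(expo1 \<Otimes>\<^sub>M unif01))" for x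
  define F2 where "F2 x = (\<integral>\<^sup>+v. g (x, H_op V i j v s) \<partial>unif01)" for x
  have IJ: "i \<in> V \<union> B" "j \<in> V \<union> B" using ij by auto
  interpret MX: prob_space "muX V B" by (rule prob_muX[OF fin])
  interpret EU: prob_space "expo1 \<Otimes>\<^sub>M unif01" by (rule prob_EU)
  have psf: "pair_sigma_finite (muX V B) unif01"
    by (simp add: pair_sigma_finite_def U01.sigma_finite_measure_axioms MX.sigma_finite_measure_axioms)
  have j1: "(\<lambda>z. g (case snd z of (c, u) \<Rightarrow> H_bdry i j c u (fst z, s))) \<in> borel_measurable (muX V B \<Otimes>\<^sub>M (expo1 \<Otimes>\<^sub>M unif01))"
  proof -
    have "(\<lambda>z. ((fst z, s), snd z)) \<in> muX V B \<Otimes>\<^sub>M (expo1 \<Otimes>\<^sub>M unif01) \<rightarrow>\<^sub>M SXT V B \<Otimes>\<^sub>M (borel \<Otimes>\<^sub>M borel)"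
      using phi_meas[OF s, of "expo1 \<Otimes>\<^sub>M unif01"]
      by (simp add: measurable_cong_sets[OF refl sets_pair_measure_cong[OF refl sets_pair_measure_cong[OF sets_expo1 sets_unif01]]])
    from measurable_compose[OF measurable_compose[OF this meas_H_bdry[OF IJ]] g] show ?thesis
      by (simp add: split_beta')
  qed
  have j2: "(\<lambda>z. g (fst z, H_op V i j (snd z) s)) \<in> borel_measurable (muX V B \<Otimes>\<^sub>M unif01)"
  proof -
    have "(\<lambda>z. (s, snd z)) \<in> muX V B \<Otimes>\<^sub>M unif01 \<rightarrow>\<^sub>M SX V B \<Otimes>\<^sub>M borel"
      by (rule measurable_Pair[OF measurable_const[OF s]])
        (simp add: measurable_cong_sets[OF refl sets_unif01[symmetric]])
    from measurable_compose[OF this meas_H_op[OF IJ]]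
    have "(\<lambda>z. H_op V i j (snd z) s) \<in> muX V B \<Otimes>\<^sub>M unif01 \<rightarrow>\<^sub>M SX V B" by simp
    from gcomp[OF g fst_muX this] show ?thesis .
  qed
  have F1m: "F1 \<in> borel_measurable (PiM (V \<union> B) (\<lambda>_. expo1))"
    unfolding F1_def muX_def[symmetric]
    by (rule EU.borel_measurable_nn_integral) (use j1 in \<open>simp add: split_beta'\<close>)
  have F2m: "F2 \<in> borel_measurable (PiM (V \<union> B) (\<lambda>_. expo1))"
    unfolding F2_def muX_def[symmetric]
    by (rule U01.borel_measurable_nn_integral) (use j2 in \<open>simp add: split_beta'\<close>)
  have per_y: "(\<integral>\<^sup>+a. \<integral>\<^sup>+b. F1 (y(i := a, j := b)) \<partial>expo1 \<partial>expo1) = (\<integral>\<^sup>+a. \<integral>\<^sup>+b. F2 (y(i := a, j := b)) \<partial>expo1 \<partial>expo1)"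
    if y: "y \<in> space (PiM R (\<lambda>_. expo1))" for y
  proof -
    define G where "G a c v = g (y(i := a, j := c), s(i := w v))" for a c v
    have Gm: "(\<lambda>t. g (y(i := fa t, j := fb t), s(i := fc t))) \<in> borel_measurable M"
      if "fa \<in> borel_measurable M" "fb \<in> borel_measurable M" "fc \<in> borel_measurable M"
      for fa fb fc and M :: "'x measure"
      by (rule gcomp[OF g upd2[OF y[unfolded R_def] IJ that(1,2)] upd_s1[OF s IJ(1) that(3)]])
    define h where "h a (b::real) v = (\<integral>\<^sup>+c. G a c v \<partial>expo1)" for a b v
    have hm: "(\<lambda>x. h (fst x) (fst (snd x)) (snd (snd x))) \<in> borel_measurable (borel \<Otimes>\<^sub>M borel \<Otimes>\<^sub>M borel)"
    proof -
      have "(\<lambda>z. G (fst (fst z)) (snd z) (snd (snd (fst z)))) \<in> borel_measurable ((borel \<Otimes>\<^sub>M borel \<Otimes>\<^sub>M (borel :: real measure)) \<Otimes>\<^sub>M expo1)"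
        unfolding G_def w_def by (rule Gm) measurable
      then show ?thesis unfolding h_def
        by (intro E1.borel_measurable_nn_integral) (simp add: split_beta')
    qed
    have "(\<integral>\<^sup>+a. \<integral>\<^sup>+b. F1 (y(i := a, j := b)) \<partial>expo1 \<partial>expo1) =
       (\<integral>\<^sup>+a. \<integral>\<^sup>+b. \<integral>\<^sup>+u. h (u * (a + b)) ((1 - u) * (a + b)) (a / (a + b)) \<partial>unif01 \<partial>expo1 \<partial>expo1)"
    proof (rule nn_integral_cong_AE)
      show "AE a in expo1. (\<integral>\<^sup>+b. F1 (y(i := a, j := b)) \<partial>expo1) =
          (\<integral>\<^sup>+b. \<integral>\<^sup>+u. h (u * (a + b)) ((1 - u) * (a + b)) (a / (a + b)) \<partial>unif01 \<partial>expo1)"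
        using AE_expo1_pos
      proof eventually_elim
        case (elim a)
        show ?case
        proof (rule nn_integral_cong_AE)
          show "AE b in expo1. F1 (y(i := a, j := b)) =
              (\<integral>\<^sup>+u. h (u * (a + b)) ((1 - u) * (a + b)) (a / (a + b)) \<partial>unif01)"
            using AE_expo1_pos
          proof eventually_elim
            case (elim b)
            then have ab: "a + b \<noteq> 0" using \<open>0 < a\<close> by simp
            have "F1 (y(i := a, j := b)) = (\<integral>\<^sup>+z. G (snd z * (a + b)) (fst z) (a / (a + b)) \<partial>(expo1 \<Otimes>\<^sub>M unif01))"
              unfolding F1_def G_def w_def using ij(3) ab by (simp add: HD_pt split_beta')
            also have "\<dots> = (\<integral>\<^sup>+u. \<integral>\<^sup>+c. G (u * (a + b)) c (a / (a + b)) \<partial>expo1 \<partial>unif01)"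
            proof -
              have "(\<lambda>z. G (snd z * (a + b)) (fst z) (a / (a + b))) \<in> borel_measurable (expo1 \<Otimes>\<^sub>M unif01)"
                unfolding G_def w_def by (rule Gm) measurable
              from pair_sigma_finite.nn_integral_snd[OF psf_EU this] show ?thesis by simp
            qed
            finally show ?case unfolding h_def .
          qed
        qed
      qed
    qed
    also have "\<dots> = (\<integral>\<^sup>+a. \<integral>\<^sup>+b. \<integral>\<^sup>+v. h a b v \<partial>unif01 \<partial>expo1 \<partial>expo1)"
      by (rule core3'[OF hm])
    also have "\<dots> = (\<integral>\<^sup>+a. \<integral>\<^sup>+v. \<integral>\<^sup>+c. G a c v \<partial>expo1 \<partial>unif01 \<partial>expo1)"
      unfolding h_def by (simp add: E1.emeasure_space_1)
    also have "\<dots> = (\<integral>\<^sup>+a. \<integral>\<^sup>+b. \<integral>\<^sup>+v. G a b v \<partial>unif01 \<partial>expo1 \<partial>expo1)"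
    proof (rule nn_integral_cong)
      fix a
      have "(\<lambda>z. G a (snd z) (fst z)) \<in> borel_measurable (unif01 \<Otimes>\<^sub>M expo1)"
        unfolding G_def w_def by (rule Gm) measurable
      then show "(\<integral>\<^sup>+v. \<integral>\<^sup>+c. G a c v \<partial>expo1 \<partial>unif01) = (\<integral>\<^sup>+b. \<integral>\<^sup>+v. G a b v \<partial>unif01 \<partial>expo1)"
        by (intro pair_sigma_finite.Fubini'[OF psf_UE, symmetric]) (simp add: split_beta')
    qed
    also have "\<dots> = (\<integral>\<^sup>+a. \<integral>\<^sup>+b. F2 (y(i := a, j := b)) \<partial>expo1 \<partial>expo1)"
      unfolding F2_def G_def w_def using ij by (simp add: H_op_bdry)
    finally show ?thesis .
  qed
  have "(\<integral>\<^sup>+x. F1 x \<partial>muX V B) = (\<integral>\<^sup>+y. \<integral>\<^sup>+a. \<integral>\<^sup>+b. F1 (y(i := a, j := b)) \<partial>expo1 \<partial>expo1 \<partial>PiM R (\<lambda>_. expo1))"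
    unfolding muX_def R_def by (rule muX_split2[OF fin ij(3) IJ F1m])
  also have "\<dots> = (\<integral>\<^sup>+y. \<integral>\<^sup>+a. \<integral>\<^sup>+b. F2 (y(i := a, j := b)) \<partial>expo1 \<partial>expo1 \<partial>PiM R (\<lambda>_. expo1))"
    by (rule nn_integral_cong) (rule per_y)
  also have "\<dots> = (\<integral>\<^sup>+x. F2 x \<partial>muX V B)"
    unfolding muX_def R_def by (rule muX_split2[OF fin ij(3) IJ F2m, symmetric])
  also have "\<dots> = (\<integral>\<^sup>+v. (\<integral>\<^sup>+x. g (x, H_op V i j v s) \<partial>muX V B) \<partial>unif01)"
    unfolding F2_def by (rule pair_sigma_finite.Fubini'[OF psf, symmetric]) (use j2 in \<open>simp add: split_beta'\<close>)
  finally show ?thesis unfolding F1_def .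
qed


lemma F1_bulk_meas:
  assumes IJ: "i \<in> V \<union> B" "j \<in> V \<union> B" and s: "s \<in> space (SX V B)" and g: "g \<in> borel_measurable (SXT V B)"
  shows "(\<lambda>x. \<integral>\<^sup>+u. g (H_bulk i j u (x, s)) \<partial>unif01) \<in> borel_measurable (muX V B)"
proof -
  have "(\<lambda>z. ((fst z, s), snd z)) \<in> muX V B \<Otimes>\<^sub>M unif01 \<rightarrow>\<^sub>M SXT V B \<Otimes>\<^sub>M borel"
    using phi_meas[OF s, of unif01] by (simp add: measurable_cong_sets[OF refl sets_pair_measure_cong[OF refl sets_unif01]])
  from measurable_compose[OF measurable_compose[OF this meas_H_bulk[OF IJ]] g]
  have "(\<lambda>z. g (H_bulk i j (snd z) (fst z, s))) \<in> borel_measurable (muX V B \<Otimes>\<^sub>M unif01)" by simp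
  then show ?thesis
    by (intro U01.borel_measurable_nn_integral) (simp add: split_beta')
qed

lemma F1_bdry_meas:
  assumes IJ: "i \<in> V \<union> B" "j \<in> V \<union> B" and s: "s \<in> space (SX V B)" and g: "g \<in> borel_measurable (SXT V B)"
  shows "(\<lambda>x. \<integral>\<^sup>+z. g (case z of (c, u) \<Rightarrow> H_bdry i j c u (x, s)) \<partial>(expo1 \<Otimes>\<^sub>M unif01)) \<in> borel_measurable (muX V B)"
proof -
  interpret EU: prob_space "expo1 \<Otimes>\<^sub>M unif01" by (rule prob_EU)
  have "(\<lambda>z. ((fst z, s), snd z)) \<in> muX V B \<Otimes>\<^sub>M (expo1 \<Otimes>\<^sub>M unif01) \<rightarrow>\<^sub>M SXT V B \<Otimes>\<^sub>M (borel \<Otimes>\<^sub>M borel)"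
    using phi_meas[OF s, of "expo1 \<Otimes>\<^sub>M unif01"]
    by (simp add: measurable_cong_sets[OF refl sets_pair_measure_cong[OF refl sets_pair_measure_cong[OF sets_expo1 sets_unif01]]])
  from measurable_compose[OF measurable_compose[OF this meas_H_bdry[OF IJ]] g]
  have "(\<lambda>z. g (case snd z of (c, u) \<Rightarrow> H_bdry i j c u (fst z, s))) \<in> borel_measurable (muX V B \<Otimes>\<^sub>M (expo1 \<Otimes>\<^sub>M unif01))"
    by (simp add: split_beta')
  then show ?thesis
    by (intro EU.borel_measurable_nn_integral) (simp add: split_beta')
qed

lemma graph_fin_VB: "graph_ok V B Ebar \<Longrightarrow> finite (V \<union> B)"
  unfolding graph_ok_def by simp

lemma graph_disj: "graph_ok V B Ebar \<Longrightarrow> V \<inter> B = {}"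
  unfolding graph_ok_def by simp

lemma gprime_meas:
  assumes fin: "finite (V \<union> B)" and g: "g \<in> borel_measurable (SXT V B)"
  shows "(\<lambda>s'. \<integral>\<^sup>+x. g (x, s') \<partial>muX V B) \<in> borel_measurable (SX V B)"
proof -
  interpret MX: prob_space "muX V B" by (rule prob_muX[OF fin])
  have sn: "snd \<in> SX V B \<Otimes>\<^sub>M muX V B \<rightarrow>\<^sub>M SX V B"
    by (simp add: measurable_cong_sets[OF sets_pair_measure_cong[OF refl sets_muX] refl])
  have "(\<lambda>z. g (snd z, fst z)) \<in> borel_measurable (SX V B \<Otimes>\<^sub>M muX V B)"
    by (rule gcomp[OF g sn measurable_fst])
  then show ?thesis by (intro MX.borel_measurable_nn_integral) (simp add: split_beta')
qed

lemma stepA: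
  assumes G: "graph_ok V B Ebar" and s: "s \<in> space (SX V B)" and g: "g \<in> borel_measurable (SXT V B)"
  shows "(\<integral>\<^sup>+x. (\<integral>\<^sup>+z. g z \<partial>K_XT V B Ebar (x, s)) \<partial>muX V B) =
    (\<integral>\<^sup>+s'. (\<integral>\<^sup>+x. g (x, s') \<partial>muX V B) \<partial>K_O V B Ebar s)"
proof -
  note fin = graph_fin_VB[OF G]
  note finE = graph_fin[OF G]
  define g' where "g' s' = (\<integral>\<^sup>+x. g (x, s') \<partial>muX V B)" for s'
  have g'm: "g' \<in> borel_measurable (SX V B)" unfolding g'_def by (rule gprime_meas[OF fin g])
  let ?c = "inverse (of_nat (card (Sg Ebar)) :: ennreal)"
  have xs: "(x, s) \<in> space (SXT V B)" if "x \<in> space (muX V B)" for x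
    using that s by (simp add: SXT_def space_pair_measure space_muX)
  have Am: "(\<lambda>x. g (x, s)) \<in> borel_measurable (muX V B)"
  proof -
    have "(\<lambda>x. x) \<in> muX V B \<rightarrow>\<^sub>M SX V B" by (rule measurable_ident_sets[OF sets_muX])
    from gcomp[OF g this measurable_const[OF s]] show ?thesis .
  qed
  have Cm: "(\<lambda>x. EXT B g (x, s) e) \<in> borel_measurable (muX V B)" if e: "e \<in> Ebar" for e
  proof -
    obtain i j where e': "e = (i, j)" by (cases e)
    have IJ: "i \<in> V \<union> B" "j \<in> V \<union> B" using graph_ij[OF G e[unfolded e']] by auto
    show ?thesis unfolding e' EXT_def
      using F1_bulk_meas[OF IJ s g] F1_bdry_meas[OF IJ s g] by simp
  qed
  have Ce: "(\<integral>\<^sup>+x. EXT B g (x, s) e \<partial>muX V B) = EO V g' s e" if e: "e \<in> Ebar" for e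
  proof -
    obtain i j where e': "e = (i, j)" by (cases e)
    have ij: "i \<in> V" "j \<in> V \<union> B" "i \<noteq> j" using graph_ij[OF G e[unfolded e']] by auto
    show ?thesis
    proof (cases "j \<in> B")
      case True
      then have "j \<notin> V" using graph_disj[OF G] by auto
      then show ?thesis unfolding e' EXT_def EO_def g'_def
        using edge_bdry[OF ij(1) True ij(3) _ fin s g] True by simp
    next
      case False
      then have "j \<in> V" using ij by auto
      then show ?thesis unfolding e' EXT_def EO_def g'_def
        using edge_bulk[OF ij(1) _ ij(3) fin s g] False by simp
    qed
  qed
  have "(\<integral>\<^sup>+x. (\<integral>\<^sup>+z. g z \<partial>K_XT V B Ebar (x, s)) \<partial>muX V B) =
      (\<integral>\<^sup>+x. (g (x, s) + (\<Sum>e\<in>Ebar. EXT B g (x, s) e)) * ?c \<partial>muX V B)"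
    by (rule nn_integral_cong) (simp add: K_XT_nn[OF G xs g] divide_ennreal_def)
  also have "\<dots> = (\<integral>\<^sup>+x. g (x, s) + (\<Sum>e\<in>Ebar. EXT B g (x, s) e) \<partial>muX V B) * ?c"
    using Am Cm by (intro nn_integral_multc) (auto intro!: borel_measurable_add borel_measurable_sum)
  also have "(\<integral>\<^sup>+x. g (x, s) + (\<Sum>e\<in>Ebar. EXT B g (x, s) e) \<partial>muX V B) =
      (\<integral>\<^sup>+x. g (x, s) \<partial>muX V B) + (\<Sum>e\<in>Ebar. \<integral>\<^sup>+x. EXT B g (x, s) e \<partial>muX V B)"
    using Am Cm by (simp add: nn_integral_add borel_measurable_sum nn_integral_sum)
  also have "\<dots> = g' s + (\<Sum>e\<in>Ebar. EO V g' s e)"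
    using Ce by (simp add: g'_def)
  also have "(g' s + (\<Sum>e\<in>Ebar. EO V g' s e)) * ?c = (\<integral>\<^sup>+s'. g' s' \<partial>K_O V B Ebar s)"
    by (simp add: K_O_nn[OF G s g'm] divide_ennreal_def)
  finally show ?thesis unfolding g'_def .
qed


lemma EXT_meas:
  assumes G: "graph_ok V B Ebar" and e: "e \<in> Ebar" and g: "g \<in> borel_measurable (SXT V B)"
  shows "(\<lambda>xs. EXT B g xs e) \<in> borel_measurable (SXT V B)"
proof -
  obtain i j where e': "e = (i, j)" by (cases e)
  have IJ: "i \<in> V \<union> B" "j \<in> V \<union> B" using graph_ij[OF G e[unfolded e']] by auto
  interpret EU: prob_space "expo1 \<Otimes>\<^sub>M unif01" by (rule prob_EU)
  have m1: "(\<lambda>xs. \<integral>\<^sup>+u. g (H_bulk i j u xs) \<partial>unif01) \<in> borel_measurable (SXT V B)"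
  proof -
    have "(\<lambda>w. H_bulk i j (snd w) (fst w)) \<in> SXT V B \<Otimes>\<^sub>M unif01 \<rightarrow>\<^sub>M SXT V B"
      using meas_H_bulk[OF IJ] by (simp add: measurable_cong_sets[OF sets_pair_measure_cong[OF refl sets_unif01] refl])
    from measurable_compose[OF this g] show ?thesis
      by (intro U01.borel_measurable_nn_integral) (simp add: split_beta')
  qed
  have m2: "(\<lambda>xs. \<integral>\<^sup>+w. g (case w of (b, u) \<Rightarrow> H_bdry i j b u xs) \<partial>(expo1 \<Otimes>\<^sub>M unif01)) \<in> borel_measurable (SXT V B)"
  proof -
    have "(\<lambda>w. H_bdry i j (fst (snd w)) (snd (snd w)) (fst w)) \<in> SXT V B \<Otimes>\<^sub>M (expo1 \<Otimes>\<^sub>M unif01) \<rightarrow>\<^sub>M SXT V B"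
      using meas_H_bdry[OF IJ]
      by (simp add: measurable_cong_sets[OF sets_pair_measure_cong[OF refl sets_pair_measure_cong[OF sets_expo1 sets_unif01]] refl])
    from measurable_compose[OF this g] show ?thesis
      by (intro EU.borel_measurable_nn_integral) (simp add: split_beta')
  qed
  show ?thesis unfolding e' EXT_def using m1 m2 by simp
qed

lemma EO_meas:
  assumes G: "graph_ok V B Ebar" and e: "e \<in> Ebar" and g: "g \<in> borel_measurable (SX V B)"
  shows "(\<lambda>s. EO V g s e) \<in> borel_measurable (SX V B)"
proof -
  obtain i j where e': "e = (i, j)" by (cases e)
  have IJ: "i \<in> V \<union> B" "j \<in> V \<union> B" using graph_ij[OF G e[unfolded e']] by auto
  have "(\<lambda>w. H_op V i j (snd w) (fst w)) \<in> SX V B \<Otimes>\<^sub>M unif01 \<rightarrow>\<^sub>M SX V B"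
    using meas_H_op[OF IJ] by (simp add: measurable_cong_sets[OF sets_pair_measure_cong[OF refl sets_unif01] refl])
  from measurable_compose[OF this g] show ?thesis unfolding e' EO_def prod.case
    by (intro U01.borel_measurable_nn_integral) (simp add: split_beta')
qed

lemma sets_K_XT: "sets (K_XT V B Ebar xs) = sets (SXT V B)"
  unfolding K_XT_def by (rule sets_bind) (auto split: option.split)

lemma sets_K_O: "sets (K_O V B Ebar s) = sets (SX V B)"
  unfolding K_O_def by (rule sets_bind) (auto split: option.split)

lemma card_Sg: "graph_ok V B Ebar \<Longrightarrow> card (Sg Ebar) = Suc (card Ebar)"
  unfolding Sg_def using graph_fin[of V B Ebar] by (simp add: card_image)

lemma one_div: "(1 + of_nat n) / (1 + of_nat n) = (1 :: ennreal)"
proof -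
  have "(1 + of_nat n :: ennreal) = of_nat (Suc n)" by simp
  moreover have "(of_nat (Suc n) :: ennreal) \<noteq> 0" by (simp del: of_nat_Suc)
  moreover have "(of_nat (Suc n) :: ennreal) < top" using ennreal_of_nat_neq_top[of "Suc n"] by (simp add: less_top[symmetric] del: of_nat_Suc)
  ultimately show ?thesis by (simp del: of_nat_Suc)
qed

lemma prob_K_XT:
  assumes G: "graph_ok V B Ebar" and xs: "xs \<in> space (SXT V B)"
  shows "prob_space (K_XT V B Ebar xs)"
proof
  interpret EU: prob_space "expo1 \<Otimes>\<^sub>M unif01" by (rule prob_EU)
  have e1: "EXT B (\<lambda>_. 1) xs e = 1" for e
    by (cases e) (simp add: EXT_def U01.emeasure_space_1 EU.emeasure_space_1)
  have "(\<integral>\<^sup>+z. 1 \<partial>K_XT V B Ebar xs) = 1"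
    by (subst K_XT_nn[OF G xs]) (simp_all add: e1 card_Sg[OF G] one_div)
  then show "emeasure (K_XT V B Ebar xs) (space (K_XT V B Ebar xs)) = 1" by simp
qed

lemma prob_K_O:
  assumes G: "graph_ok V B Ebar" and s: "s \<in> space (SX V B)"
  shows "prob_space (K_O V B Ebar s)"
proof
  have e1: "EO V (\<lambda>_. 1) s e = 1" for e
    by (cases e) (simp add: EO_def U01.emeasure_space_1)
  have "(\<integral>\<^sup>+z. 1 \<partial>K_O V B Ebar s) = 1"
    by (subst K_O_nn[OF G s]) (simp_all add: e1 card_Sg[OF G] one_div)
  then show "emeasure (K_O V B Ebar s) (space (K_O V B Ebar s)) = 1" by simp
qed

lemma K_XT_meas:
  assumes G: "graph_ok V B Ebar"
  shows "K_XT V B Ebar \<in> SXT V B \<rightarrow>\<^sub>M subprob_algebra (SXT V B)"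
proof (rule measurable_subprob_algebra)
  fix xs assume xs: "xs \<in> space (SXT V B)"
  show "subprob_space (K_XT V B Ebar xs)"
    using prob_space_imp_subprob_space[OF prob_K_XT[OF G xs]] .
  show "sets (K_XT V B Ebar xs) = sets (SXT V B)" by (rule sets_K_XT)
next
  fix A assume A: "A \<in> sets (SXT V B)"
  have ind: "indicator A \<in> borel_measurable (SXT V B)" using A by simp
  have "(\<lambda>xs. (indicator A xs + (\<Sum>e\<in>Ebar. EXT B (indicator A) xs e)) / of_nat (card (Sg Ebar)) :: ennreal)
      \<in> borel_measurable (SXT V B)"
    unfolding divide_ennreal_def
    by (intro borel_measurable_times_ennreal borel_measurable_add borel_measurable_sum EXT_meas[OF G _ ind] ind
        borel_measurable_const)
  then show "(\<lambda>xs. emeasure (K_XT V B Ebar xs) A) \<in> borel_measurable (SXT V B)"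
  proof (rule measurable_cong[THEN iffD1, rotated])
    fix xs assume xs: "xs \<in> space (SXT V B)"
    have "emeasure (K_XT V B Ebar xs) A = (\<integral>\<^sup>+z. indicator A z \<partial>K_XT V B Ebar xs)"
      using A by (simp add: sets_K_XT)
    then show "(indicator A xs + (\<Sum>e\<in>Ebar. EXT B (indicator A) xs e)) / of_nat (card (Sg Ebar)) =
        emeasure (K_XT V B Ebar xs) A"
      by (simp add: K_XT_nn[OF G xs ind])
  qed
qed

lemma K_O_meas:
  assumes G: "graph_ok V B Ebar"
  shows "K_O V B Ebar \<in> SX V B \<rightarrow>\<^sub>M subprob_algebra (SX V B)"
proof (rule measurable_subprob_algebra)
  fix s assume s: "s \<in> space (SX V B)"
  show "subprob_space (K_O V B Ebar s)"
    using prob_space_imp_subprob_space[OF prob_K_O[OF G s]] .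
  show "sets (K_O V B Ebar s) = sets (SX V B)" by (rule sets_K_O)
next
  fix A assume A: "A \<in> sets (SX V B)"
  have ind: "indicator A \<in> borel_measurable (SX V B)" using A by simp
  have "(\<lambda>s. (indicator A s + (\<Sum>e\<in>Ebar. EO V (indicator A) s e)) / of_nat (card (Sg Ebar)) :: ennreal)
      \<in> borel_measurable (SX V B)"
    unfolding divide_ennreal_def
    by (intro borel_measurable_times_ennreal borel_measurable_add borel_measurable_sum EO_meas[OF G _ ind] ind
        borel_measurable_const)
  then show "(\<lambda>s. emeasure (K_O V B Ebar s) A) \<in> borel_measurable (SX V B)"
  proof (rule measurable_cong[THEN iffD1, rotated])
    fix s assume s: "s \<in> space (SX V B)"
    have "emeasure (K_O V B Ebar s) A = (\<integral>\<^sup>+z. indicator A z \<partial>K_O V B Ebar s)"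
      using A by (simp add: sets_K_O)
    then show "(indicator A s + (\<Sum>e\<in>Ebar. EO V (indicator A) s e)) / of_nat (card (Sg Ebar)) =
        emeasure (K_O V B Ebar s) A"
      by (simp add: K_O_nn[OF G s ind])
  qed
qed


lemma space_muX_ne: "space (muX V B) \<noteq> {}"
  using space_SX_ne by (simp add: space_muX)

lemma sets_muX_SX_pair: "sets M = sets (SX V B) \<Longrightarrow> sets (muX V B \<Otimes>\<^sub>M M) = sets (SXT V B)"
  unfolding SXT_def by (intro sets_pair_measure_cong sets_muX)

lemma inter1:
  assumes G: "graph_ok V B Ebar" and mu: "prob_space \<mu>" and smu: "sets \<mu> = sets (SX V B)"
  shows "(muX V B \<Otimes>\<^sub>M \<mu>) \<bind> K_XT V B Ebar = muX V B \<Otimes>\<^sub>M (\<mu> \<bind> K_O V B Ebar)"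
proof -
  note fin = graph_fin_VB[OF G]
  interpret MX: prob_space "muX V B" by (rule prob_muX[OF fin])
  interpret MU: prob_space \<mu> by (rule mu)
  have KOm: "K_O V B Ebar \<in> \<mu> \<rightarrow>\<^sub>M subprob_algebra (SX V B)"
    using K_O_meas[OF G] by (simp add: measurable_cong_sets[OF smu refl])
  have sp: "sets (muX V B \<Otimes>\<^sub>M \<mu>) = sets (SXT V B)" by (rule sets_muX_SX_pair[OF smu])
  have KXm: "K_XT V B Ebar \<in> muX V B \<Otimes>\<^sub>M \<mu> \<rightarrow>\<^sub>M subprob_algebra (SXT V B)"
    using K_XT_meas[OF G] by (simp add: measurable_cong_sets[OF sp refl])
  have ne: "space (muX V B \<Otimes>\<^sub>M \<mu>) \<noteq> {}"
    using space_muX_ne MU.not_empty by (simp add: space_pair_measure)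
  have MB: "prob_space (\<mu> \<bind> K_O V B Ebar)"
    by (rule MU.prob_space_bind[OF _ KOm]) (use prob_K_O[OF G] smu sets_eq_imp_space_eq[OF smu] in auto)
  interpret MB: prob_space "\<mu> \<bind> K_O V B Ebar" by (rule MB)
  have smb: "sets (\<mu> \<bind> K_O V B Ebar) = sets (SX V B)"
    by (rule sets_bind[OF sets_K_O MU.not_empty])
  have psf1: "pair_sigma_finite (muX V B) \<mu>"
    by (simp add: pair_sigma_finite_def MX.sigma_finite_measure_axioms MU.sigma_finite_measure_axioms)
  have psf2: "pair_sigma_finite (muX V B) (\<mu> \<bind> K_O V B Ebar)"
    by (simp add: pair_sigma_finite_def MX.sigma_finite_measure_axioms MB.sigma_finite_measure_axioms)
  have sL: "sets ((muX V B \<Otimes>\<^sub>M \<mu>) \<bind> K_XT V B Ebar) = sets (SXT V B)"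
    by (rule sets_bind[OF _ ne]) (rule sets_K_XT)
  show ?thesis
  proof (rule measure_eqI)
    show "sets ((muX V B \<Otimes>\<^sub>M \<mu>) \<bind> K_XT V B Ebar) = sets (muX V B \<Otimes>\<^sub>M (\<mu> \<bind> K_O V B Ebar))"
      using sL sets_muX_SX_pair[OF smb] by simp
  next
    fix A assume "A \<in> sets ((muX V B \<Otimes>\<^sub>M \<mu>) \<bind> K_XT V B Ebar)"
    then have A: "A \<in> sets (SXT V B)" using sL by simp
    have indm: "indicator A \<in> borel_measurable (SXT V B)" using A by simp
    have Fm: "(\<lambda>xs. emeasure (K_XT V B Ebar xs) A) \<in> borel_measurable (muX V B \<Otimes>\<^sub>M \<mu>)"
      by (rule measurable_compose[OF KXm measurable_emeasure_subprob_algebra[OF A]])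
    have "emeasure ((muX V B \<Otimes>\<^sub>M \<mu>) \<bind> K_XT V B Ebar) A = (\<integral>\<^sup>+xs. emeasure (K_XT V B Ebar xs) A \<partial>(muX V B \<Otimes>\<^sub>M \<mu>))"
      by (rule emeasure_bind[OF ne KXm A])
    also have "\<dots> = (\<integral>\<^sup>+s. \<integral>\<^sup>+x. emeasure (K_XT V B Ebar (x, s)) A \<partial>muX V B \<partial>\<mu>)"
      using pair_sigma_finite.nn_integral_snd[OF psf1 Fm] by simp
    also have "\<dots> = (\<integral>\<^sup>+s. \<integral>\<^sup>+s'. \<integral>\<^sup>+x. indicator A (x, s') \<partial>muX V B \<partial>K_O V B Ebar s \<partial>\<mu>)"
    proof (rule nn_integral_cong)
      fix s assume "s \<in> space \<mu>"
      then have s: "s \<in> space (SX V B)" using sets_eq_imp_space_eq[OF smu] by simp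
      have "(\<integral>\<^sup>+x. emeasure (K_XT V B Ebar (x, s)) A \<partial>muX V B) = (\<integral>\<^sup>+x. \<integral>\<^sup>+z. indicator A z \<partial>K_XT V B Ebar (x, s) \<partial>muX V B)"
        using A by (intro nn_integral_cong) (simp add: sets_K_XT)
      also have "\<dots> = (\<integral>\<^sup>+s'. \<integral>\<^sup>+x. indicator A (x, s') \<partial>muX V B \<partial>K_O V B Ebar s)"
        by (rule stepA[OF G s indm])
      finally show "(\<integral>\<^sup>+x. emeasure (K_XT V B Ebar (x, s)) A \<partial>muX V B) = \<dots>" .
    qed
    also have "\<dots> = (\<integral>\<^sup>+s'. \<integral>\<^sup>+x. indicator A (x, s') \<partial>muX V B \<partial>(\<mu> \<bind> K_O V B Ebar))"
      by (rule nn_integral_bind[OF gprime_meas[OF fin indm] KOm, symmetric])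
    also have "\<dots> = integral\<^sup>N (muX V B \<Otimes>\<^sub>M (\<mu> \<bind> K_O V B Ebar)) (indicator A)"
    proof -
      have "indicator A \<in> borel_measurable (muX V B \<Otimes>\<^sub>M (\<mu> \<bind> K_O V B Ebar))"
        using indm by (simp add: measurable_cong_sets[OF sets_muX_SX_pair[OF smb] refl])
      from pair_sigma_finite.nn_integral_snd[OF psf2 this] show ?thesis by simp
    qed
    also have "\<dots> = emeasure (muX V B \<Otimes>\<^sub>M (\<mu> \<bind> K_O V B Ebar)) A"
      using A sets_muX_SX_pair[OF smb] by simp
    finally show "emeasure ((muX V B \<Otimes>\<^sub>M \<mu>) \<bind> K_XT V B Ebar) A = emeasure (muX V B \<Otimes>\<^sub>M (\<mu> \<bind> K_O V B Ebar)) A" .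
  qed
qed

lemma iter_inter:
  assumes G: "graph_ok V B Ebar" and mu: "prob_space \<mu>" and smu: "sets \<mu> = sets (SX V B)"
  shows "((\<lambda>M. M \<bind> K_XT V B Ebar) ^^ n) (muX V B \<Otimes>\<^sub>M \<mu>) = muX V B \<Otimes>\<^sub>M ((\<lambda>M. M \<bind> K_O V B Ebar) ^^ n) \<mu>
    \<and> prob_space (((\<lambda>M. M \<bind> K_O V B Ebar) ^^ n) \<mu>) \<and> sets (((\<lambda>M. M \<bind> K_O V B Ebar) ^^ n) \<mu>) = sets (SX V B)"
proof (induction n)
  case 0
  then show ?case using mu smu by simp
next
  case (Suc n)
  let ?Q = "((\<lambda>M. M \<bind> K_O V B Ebar) ^^ n) \<mu>"
  have pQ: "prob_space ?Q" and sQ: "sets ?Q = sets (SX V B)" using Suc.IH by auto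
  interpret Q: prob_space ?Q by (rule pQ)
  have KOm: "K_O V B Ebar \<in> ?Q \<rightarrow>\<^sub>M subprob_algebra (SX V B)"
    using K_O_meas[OF G] by (simp add: measurable_cong_sets[OF sQ refl])
  have "prob_space (?Q \<bind> K_O V B Ebar)"
    by (rule Q.prob_space_bind[OF _ KOm]) (use prob_K_O[OF G] sQ sets_eq_imp_space_eq[OF sQ] in auto)
  moreover have "sets (?Q \<bind> K_O V B Ebar) = sets (SX V B)"
    by (rule sets_bind[OF sets_K_O Q.not_empty])
  moreover have "((\<lambda>M. M \<bind> K_XT V B Ebar) ^^ Suc n) (muX V B \<Otimes>\<^sub>M \<mu>) = muX V B \<Otimes>\<^sub>M (?Q \<bind> K_O V B Ebar)"
    using Suc.IH inter1[OF G pQ sQ] by simp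
  ultimately show ?case by simp
qed


lemma sets_poisson[measurable_cong]: "sets (poisson_meas r) = sets (count_space UNIV)"
  unfolding poisson_meas_def by simp

lemma space_poisson: "space (poisson_meas r) = UNIV"
  unfolding poisson_meas_def by simp

lemma prob_poisson:
  assumes r: "0 \<le> r" shows "prob_space (poisson_meas r)"
proof
  have summable: "summable (\<lambda>x::nat. r ^ x / fact x)" using summable_exp
    by (simp add: field_simps divide_inverse [symmetric])
  have "(\<integral>\<^sup>+(x::nat). r ^ x / fact x * exp (-r) \<partial>count_space UNIV) =
          exp (-r) * (\<integral>\<^sup>+(x::nat). r ^ x / fact x \<partial>count_space UNIV)"
    using r by (simp add: field_simps nn_integral_cmult[symmetric] ennreal_mult'[symmetric])
  also from r have "(\<integral>\<^sup>+(x::nat). r ^ x / fact x \<partial>count_space UNIV) = (\<Sum>x. r ^ x / fact x)"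
    by (simp_all add: nn_integral_count_space_nat suminf_ennreal summable ennreal_suminf_neq_top)
  also have "... = exp r" unfolding exp_def
    by (simp add: field_simps divide_inverse [symmetric])
  also have "ennreal (exp (-r)) * ennreal (exp r) = 1"
    by (simp add: mult_exp_exp ennreal_mult[symmetric])
  finally have "(\<integral>\<^sup>+ x. ennreal (r ^ x / (fact x) * exp (- r)) \<partial>count_space UNIV) = 1" .
  then show "emeasure (poisson_meas r) (space (poisson_meas r)) = 1"
    unfolding poisson_meas_def by (simp add: emeasure_density)
qed

lemma meas_poisson: "f \<in> poisson_meas r \<rightarrow>\<^sub>M N \<longleftrightarrow> f \<in> UNIV \<rightarrow> space N"
  by (simp add: measurable_cong_sets[OF sets_poisson refl])

lemma bind_prod_commute:
  assumes fin: "finite (V \<union> B)" and P: "prob_space Pm" and sP: "sets Pm = sets (count_space (UNIV :: nat set))"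
    and Q: "\<And>n. prob_space (Q n) \<and> sets (Q n) = sets (SX V B)"
  shows "Pm \<bind> (\<lambda>n. muX V B \<Otimes>\<^sub>M Q n) = muX V B \<Otimes>\<^sub>M (Pm \<bind> Q)"
proof -
  interpret MX: prob_space "muX V B" by (rule prob_muX[OF fin])
  interpret PM: prob_space Pm by (rule P)
  have mc: "f \<in> Pm \<rightarrow>\<^sub>M N \<longleftrightarrow> f \<in> UNIV \<rightarrow> space N" for f and N :: "'z measure"
    by (simp add: measurable_cong_sets[OF sP refl])
  have Qm: "Q \<in> Pm \<rightarrow>\<^sub>M subprob_algebra (SX V B)"
    using Q by (auto simp: mc space_subprob_algebra prob_space_imp_subprob_space)
  have pq: "prob_space (muX V B \<Otimes>\<^sub>M Q n)" for n
  proof -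
    interpret Qn: prob_space "Q n" using Q by auto
    interpret pair_prob_space "muX V B" "Q n" by unfold_locales
    show ?thesis by (rule P.prob_space_axioms)
  qed
  have sq: "sets (muX V B \<Otimes>\<^sub>M Q n) = sets (SXT V B)" for n
    using Q sets_muX_SX_pair by blast
  have PQm: "(\<lambda>n. muX V B \<Otimes>\<^sub>M Q n) \<in> Pm \<rightarrow>\<^sub>M subprob_algebra (SXT V B)"
    using pq sq by (auto simp: mc space_subprob_algebra prob_space_imp_subprob_space)
  have pb: "prob_space (Pm \<bind> Q)"
    by (rule PM.prob_space_bind[OF _ Qm]) (use Q in auto)
  interpret PB: prob_space "Pm \<bind> Q" by (rule pb)
  have sb: "sets (Pm \<bind> Q) = sets (SX V B)"
    by (rule sets_bind[OF _ PM.not_empty]) (use Q in auto)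
  have sL: "sets (Pm \<bind> (\<lambda>n. muX V B \<Otimes>\<^sub>M Q n)) = sets (SXT V B)"
    by (rule sets_bind[OF sq PM.not_empty])
  have psfB: "pair_sigma_finite (muX V B) (Pm \<bind> Q)"
    by (simp add: pair_sigma_finite_def MX.sigma_finite_measure_axioms PB.sigma_finite_measure_axioms)
  show ?thesis
  proof (rule measure_eqI)
    show "sets (Pm \<bind> (\<lambda>n. muX V B \<Otimes>\<^sub>M Q n)) = sets (muX V B \<Otimes>\<^sub>M (Pm \<bind> Q))"
      using sL sets_muX_SX_pair[OF sb] by simp
  next
    fix A assume "A \<in> sets (Pm \<bind> (\<lambda>n. muX V B \<Otimes>\<^sub>M Q n))"
    then have A: "A \<in> sets (SXT V B)" using sL by simp
    have indm: "indicator A \<in> borel_measurable (SXT V B)" using A by simp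
    have "emeasure (Pm \<bind> (\<lambda>n. muX V B \<Otimes>\<^sub>M Q n)) A = (\<integral>\<^sup>+n. emeasure (muX V B \<Otimes>\<^sub>M Q n) A \<partial>Pm)"
      by (rule emeasure_bind[OF PM.not_empty PQm A])
    also have "\<dots> = (\<integral>\<^sup>+n. \<integral>\<^sup>+s. \<integral>\<^sup>+x. indicator A (x, s) \<partial>muX V B \<partial>Q n \<partial>Pm)"
    proof (rule nn_integral_cong)
      fix n
      interpret Qn: prob_space "Q n" using Q by auto
      have psf: "pair_sigma_finite (muX V B) (Q n)"
        by (simp add: pair_sigma_finite_def MX.sigma_finite_measure_axioms Qn.sigma_finite_measure_axioms)
      have "indicator A \<in> borel_measurable (muX V B \<Otimes>\<^sub>M Q n)"
        using indm by (simp add: measurable_cong_sets[OF sq refl])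
      from pair_sigma_finite.nn_integral_snd[OF psf this]
      show "emeasure (muX V B \<Otimes>\<^sub>M Q n) A = (\<integral>\<^sup>+s. \<integral>\<^sup>+x. indicator A (x, s) \<partial>muX V B \<partial>Q n)"
        using A sq[of n] by simp
    qed
    also have "\<dots> = (\<integral>\<^sup>+s. \<integral>\<^sup>+x. indicator A (x, s) \<partial>muX V B \<partial>(Pm \<bind> Q))"
      by (rule nn_integral_bind[OF gprime_meas[OF fin indm] Qm, symmetric])
    also have "\<dots> = emeasure (muX V B \<Otimes>\<^sub>M (Pm \<bind> Q)) A"
    proof -
      have "indicator A \<in> borel_measurable (muX V B \<Otimes>\<^sub>M (Pm \<bind> Q))"
        using indm by (simp add: measurable_cong_sets[OF sets_muX_SX_pair[OF sb] refl])
      from pair_sigma_finite.nn_integral_snd[OF psfB this] show ?thesis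
        using A sets_muX_SX_pair[OF sb] by simp
    qed
    finally show "emeasure (Pm \<bind> (\<lambda>n. muX V B \<Otimes>\<^sub>M Q n)) A = emeasure (muX V B \<Otimes>\<^sub>M (Pm \<bind> Q)) A" .
  qed
qed

lemma part1:
  assumes G: "graph_ok V B Ebar" and t: "0 \<le> t" and mu: "prob_space \<mu>" and smu: "sets \<mu> = sets (SX V B)"
  shows "P_XT V B Ebar t (muX V B \<Otimes>\<^sub>M \<mu>) = muX V B \<Otimes>\<^sub>M P_O V B Ebar t \<mu>"
proof -
  have r: "0 \<le> unif_rate Ebar * t" using t by (simp add: unif_rate_def)
  have "P_XT V B Ebar t (muX V B \<Otimes>\<^sub>M \<mu>) =
      poisson_meas (unif_rate Ebar * t) \<bind> (\<lambda>n. muX V B \<Otimes>\<^sub>M ((\<lambda>M. M \<bind> K_O V B Ebar) ^^ n) \<mu>)"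
    unfolding P_XT_def semigroup_def using iter_inter[OF G mu smu] by simp
  also have "\<dots> = muX V B \<Otimes>\<^sub>M P_O V B Ebar t \<mu>"
    unfolding P_O_def semigroup_def
    by (rule bind_prod_commute[OF graph_fin_VB[OF G] prob_poisson[OF r] sets_poisson])
      (use iter_inter[OF G mu smu] in blast)
  finally show ?thesis .
qed


lemma iter_meas:
  assumes K: "K \<in> S \<rightarrow>\<^sub>M subprob_algebra S"
  shows "(\<lambda>y. ((\<lambda>M. M \<bind> K) ^^ n) (return S y)) \<in> S \<rightarrow>\<^sub>M subprob_algebra S"
proof (induction n)
  case 0 then show ?case by simp
next
  case (Suc n)
  then show ?case using measurable_bind2[OF Suc K] by simp
qed

lemma iter_lin:
  assumes K: "K \<in> S \<rightarrow>\<^sub>M subprob_algebra S" and smu: "sets \<mu> = sets S"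
  shows "((\<lambda>M. M \<bind> K) ^^ n) \<mu> = \<mu> \<bind> (\<lambda>y. ((\<lambda>M. M \<bind> K) ^^ n) (return S y))"
proof (induction n)
  case 0 then show ?case using bind_return''[OF smu] by simp
next
  case (Suc n)
  have Gm: "(\<lambda>y. ((\<lambda>M. M \<bind> K) ^^ n) (return S y)) \<in> \<mu> \<rightarrow>\<^sub>M subprob_algebra S"
    using iter_meas[OF K, of n] by (simp add: measurable_cong_sets[OF smu refl])
  show ?case using Suc bind_assoc[OF Gm K] by simp
qed

lemma iter_pair_meas:
  assumes K: "K \<in> S \<rightarrow>\<^sub>M subprob_algebra S"
  shows "(\<lambda>(n, y). ((\<lambda>M. M \<bind> K) ^^ n) (return S y)) \<in> count_space UNIV \<Otimes>\<^sub>M S \<rightarrow>\<^sub>M subprob_algebra S"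
  by (rule measurable_pair_measure_countable1) (simp_all add: iter_meas[OF K])

lemma sg_lin:
  assumes K: "K \<in> S \<rightarrow>\<^sub>M subprob_algebra S" and mu: "prob_space \<mu>" and smu: "sets \<mu> = sets S"
    and P: "prob_space Pm" and sP: "sets Pm = sets (count_space (UNIV :: nat set))"
  shows "Pm \<bind> (\<lambda>n. ((\<lambda>M. M \<bind> K) ^^ n) \<mu>) = \<mu> \<bind> (\<lambda>y. Pm \<bind> (\<lambda>n. ((\<lambda>M. M \<bind> K) ^^ n) (return S y)))"
proof -
  interpret PP: pair_prob_space Pm \<mu> by (simp add: pair_prob_space_def pair_sigma_finite_def P mu
        prob_space_imp_sigma_finite)
  have C: "(\<lambda>(n, y). ((\<lambda>M. M \<bind> K) ^^ n) (return S y)) \<in> Pm \<Otimes>\<^sub>M \<mu> \<rightarrow>\<^sub>M subprob_algebra S"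
    using iter_pair_meas[OF K] by (simp add: measurable_cong_sets[OF sets_pair_measure_cong[OF sP smu] refl])
  have "Pm \<bind> (\<lambda>n. ((\<lambda>M. M \<bind> K) ^^ n) \<mu>) = Pm \<bind> (\<lambda>n. \<mu> \<bind> (\<lambda>y. ((\<lambda>M. M \<bind> K) ^^ n) (return S y)))"
    using iter_lin[OF K smu] by simp
  also have "\<dots> = \<mu> \<bind> (\<lambda>y. Pm \<bind> (\<lambda>n. ((\<lambda>M. M \<bind> K) ^^ n) (return S y)))"
    by (rule PP.bind_rotate[OF C])
  finally show ?thesis .
qed

lemma sg_meas:
  assumes K: "K \<in> S \<rightarrow>\<^sub>M subprob_algebra S"
    and P: "prob_space Pm" and sP: "sets Pm = sets (count_space (UNIV :: nat set))"
  shows "(\<lambda>y. Pm \<bind> (\<lambda>n. ((\<lambda>M. M \<bind> K) ^^ n) (return S y))) \<in> S \<rightarrow>\<^sub>M subprob_algebra S"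
proof (rule measurable_bind[where N=Pm])
  show "(\<lambda>y. Pm) \<in> S \<rightarrow>\<^sub>M subprob_algebra Pm"
    by (rule measurable_const) (simp add: space_subprob_algebra prob_space_imp_subprob_space[OF P])
  have "(\<lambda>x. (\<lambda>(n, y). ((\<lambda>M. M \<bind> K) ^^ n) (return S y)) ((\<lambda>(x, y). (y, x)) x)) \<in> S \<Otimes>\<^sub>M count_space UNIV \<rightarrow>\<^sub>M subprob_algebra S"
    by (rule measurable_compose[OF measurable_pair_swap' iter_pair_meas[OF K]])
  then show "(\<lambda>x. ((\<lambda>M. M \<bind> K) ^^ snd x) (return S (fst x))) \<in> S \<Otimes>\<^sub>M Pm \<rightarrow>\<^sub>M subprob_algebra S"
    by (simp add: split_beta' measurable_cong_sets[OF sets_pair_measure_cong[OF refl sP] refl])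
qed

lemma Pxm:
  assumes G: "graph_ok V B Ebar" and r: "0 \<le> r"
  shows "(\<lambda>y. P_XT V B Ebar r (return (SXT V B) y)) \<in> SXT V B \<rightarrow>\<^sub>M subprob_algebra (SXT V B)"
  unfolding P_XT_def semigroup_def
  by (rule sg_meas[OF K_XT_meas[OF G] prob_poisson sets_poisson]) (use r in \<open>simp add: unif_rate_def\<close>)

lemma PO_props:
  assumes G: "graph_ok V B Ebar" and r: "0 \<le> r" and mu: "prob_space \<mu>" and smu: "sets \<mu> = sets (SX V B)"
  shows "prob_space (P_O V B Ebar r \<mu>) \<and> sets (P_O V B Ebar r \<mu>) = sets (SX V B)"
proof -
  let ?Q = "\<lambda>n. ((\<lambda>M. M \<bind> K_O V B Ebar) ^^ n) \<mu>"
  have rr: "0 \<le> unif_rate Ebar * r" using r by (simp add: unif_rate_def)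
  interpret PM: prob_space "poisson_meas (unif_rate Ebar * r)" by (rule prob_poisson[OF rr])
  have Q: "prob_space (?Q n) \<and> sets (?Q n) = sets (SX V B)" for n using iter_inter[OF G mu smu] by blast
  have Qm: "?Q \<in> poisson_meas (unif_rate Ebar * r) \<rightarrow>\<^sub>M subprob_algebra (SX V B)"
    using Q by (auto simp: meas_poisson space_subprob_algebra prob_space_imp_subprob_space)
  have "prob_space (poisson_meas (unif_rate Ebar * r) \<bind> ?Q)"
    by (rule PM.prob_space_bind[OF _ Qm]) (use Q in auto)
  moreover have "sets (poisson_meas (unif_rate Ebar * r) \<bind> ?Q) = sets (SX V B)"
    by (rule sets_bind[OF _ PM.not_empty]) (use Q in auto)
  ultimately show ?thesis unfolding P_O_def semigroup_def by simp
qed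

lemma stepP:
  assumes G: "graph_ok V B Ebar" and r: "0 \<le> r" and s: "s \<in> space (SX V B)" and g: "g \<in> borel_measurable (SXT V B)"
  shows "(\<integral>\<^sup>+x. \<integral>\<^sup>+z. g z \<partial>P_XT V B Ebar r (return (SXT V B) (x, s)) \<partial>muX V B) =
    (\<integral>\<^sup>+s'. \<integral>\<^sup>+x. g (x, s') \<partial>muX V B \<partial>P_O V B Ebar r (return (SX V B) s))"
proof -
  note fin = graph_fin_VB[OF G]
  let ?mu0 = "return (SX V B) s"
  let ?M0 = "muX V B \<Otimes>\<^sub>M ?mu0"
  let ?Px = "\<lambda>y. P_XT V B Ebar r (return (SXT V B) y)"
  interpret MX: prob_space "muX V B" by (rule prob_muX[OF fin])
  have p0: "prob_space ?mu0" by (rule prob_space_return[OF s])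
  interpret M0: prob_space ?mu0 by (rule p0)
  have s0: "sets ?mu0 = sets (SX V B)" by simp
  interpret PP0: pair_prob_space "muX V B" ?mu0 by unfold_locales
  have pM0: "prob_space ?M0" by (rule PP0.P.prob_space_axioms)
  have sM0: "sets ?M0 = sets (SXT V B)" by (rule sets_muX_SX_pair[OF s0])
  have rr: "0 \<le> unif_rate Ebar * r" using r by (simp add: unif_rate_def)
  have PX: "(\<lambda>y. P_XT V B Ebar r (return (SXT V B) y)) \<in> SXT V B \<rightarrow>\<^sub>M subprob_algebra (SXT V B)"
    by (rule Pxm[OF G r])
  define H where "H xs = (\<integral>\<^sup>+z. g z \<partial>?Px xs)" for xs
  have Hm: "H \<in> borel_measurable (SXT V B)"
    unfolding H_def by (rule measurable_compose[OF PX nn_integral_measurable_subprob_algebra[OF g]])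
  have lin: "P_XT V B Ebar r ?M0 = ?M0 \<bind> ?Px"
    unfolding P_XT_def semigroup_def
    by (rule sg_lin[OF K_XT_meas[OF G] pM0 sM0 prob_poisson[OF rr] sets_poisson])
  have "(\<integral>\<^sup>+x. H (x, s) \<partial>muX V B) = (\<integral>\<^sup>+s''. \<integral>\<^sup>+x. H (x, s'') \<partial>muX V B \<partial>?mu0)"
  proof -
    have "(\<lambda>s''. \<integral>\<^sup>+x. H (x, s'') \<partial>muX V B) \<in> borel_measurable ?mu0"
      using gprime_meas[OF fin Hm] by simp
    then show ?thesis by (simp add: nn_integral_return s)
  qed
  also have "\<dots> = (\<integral>\<^sup>+xs. H xs \<partial>?M0)"
    by (rule PP0.nn_integral_snd) (simp add: measurable_cong_sets[OF sM0 refl] Hm)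
  also have "\<dots> = (\<integral>\<^sup>+z. g z \<partial>(?M0 \<bind> ?Px))"
    unfolding H_def
    by (rule nn_integral_bind[OF g, symmetric]) (simp add: measurable_cong_sets[OF sM0 refl] PX)
  also have "\<dots> = (\<integral>\<^sup>+z. g z \<partial>(muX V B \<Otimes>\<^sub>M P_O V B Ebar r ?mu0))"
    using part1[OF G r p0 s0] lin by simp
  also have "\<dots> = (\<integral>\<^sup>+s'. \<integral>\<^sup>+x. g (x, s') \<partial>muX V B \<partial>P_O V B Ebar r ?mu0)"
  proof -
    have PO: "prob_space (P_O V B Ebar r ?mu0)" "sets (P_O V B Ebar r ?mu0) = sets (SX V B)"
      using PO_props[OF G r p0 s0] by auto
    interpret PO: prob_space "P_O V B Ebar r ?mu0" by (rule PO(1))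
    interpret PP1: pair_prob_space "muX V B" "P_O V B Ebar r ?mu0" by unfold_locales
    show ?thesis
      by (rule PP1.nn_integral_snd[symmetric]) (simp add: measurable_cong_sets[OF sets_muX_SX_pair[OF PO(2)] refl] g)
  qed
  finally show ?thesis unfolding H_def .
qed


lemma fdd_meas:
  assumes G: "graph_ok V B Ebar"
  shows "sorted (map fst tfs) \<Longrightarrow> (\<forall>(t, f) \<in> set tfs. tau \<le> t \<and> f \<in> borel_measurable (SX V B)) \<Longrightarrow>
    (\<lambda>y. fdd_chain (P_XT V B Ebar) (SXT V B) (map (\<lambda>(t, f). (t, f \<circ> snd)) tfs) tau y) \<in> borel_measurable (SXT V B)"
proof (induction tfs arbitrary: tau)
  case Nil then show ?case by simp
next
  case (Cons tf rest)
  obtain t f where tf: "tf = (t, f)" by (cases tf)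
  have r: "0 \<le> t - tau" and fm: "f \<in> borel_measurable (SX V B)" using Cons.prems tf by auto
  have IH: "(\<lambda>y. fdd_chain (P_XT V B Ebar) (SXT V B) (map (\<lambda>(t, f). (t, f \<circ> snd)) rest) t y) \<in> borel_measurable (SXT V B)"
    using Cons.prems tf by (intro Cons.IH) auto
  have fs: "(\<lambda>z. f (snd z)) \<in> borel_measurable (SXT V B)"
    unfolding SXT_def by (rule measurable_compose[OF measurable_snd fm])
  have gm: "(\<lambda>z. (f \<circ> snd) z * fdd_chain (P_XT V B Ebar) (SXT V B) (map (\<lambda>(t, f). (t, f \<circ> snd)) rest) t z)
      \<in> borel_measurable (SXT V B)"
    by (rule borel_measurable_times_ennreal[OF _ IH]) (use fs in \<open>simp add: comp_def\<close>)
  show ?case unfolding tf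
    by (simp only: list.map prod.case fdd_chain.simps)
      (rule measurable_compose[OF Pxm[OF G r] nn_integral_measurable_subprob_algebra[OF gm]])
qed

lemma fdd_eq:
  assumes G: "graph_ok V B Ebar"
  shows "sorted (map fst tfs) \<Longrightarrow> (\<forall>(t, f) \<in> set tfs. tau \<le> t \<and> f \<in> borel_measurable (SX V B)) \<Longrightarrow>
    s \<in> space (SX V B) \<Longrightarrow>
    (\<integral>\<^sup>+x. fdd_chain (P_XT V B Ebar) (SXT V B) (map (\<lambda>(t, f). (t, f \<circ> snd)) tfs) tau (x, s) \<partial>muX V B)
    = fdd_chain (P_O V B Ebar) (SX V B) tfs tau s"
proof (induction tfs arbitrary: tau s)
  case Nil
  interpret MX: prob_space "muX V B" by (rule prob_muX[OF graph_fin_VB[OF G]])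
  show ?case by (simp add: MX.emeasure_space_1)
next
  case (Cons tf rest)
  obtain t f where tf: "tf = (t, f)" by (cases tf)
  have r: "0 \<le> t - tau" and fm: "f \<in> borel_measurable (SX V B)" using Cons.prems tf by auto
  have prem: "sorted (map fst rest)" "\<forall>(t', f') \<in> set rest. t \<le> t' \<and> f' \<in> borel_measurable (SX V B)"
    using Cons.prems tf by auto
  let ?CX = "\<lambda>y. fdd_chain (P_XT V B Ebar) (SXT V B) (map (\<lambda>(t, f). (t, f \<circ> snd)) rest) t y"
  have CXm: "?CX \<in> borel_measurable (SXT V B)" by (rule fdd_meas[OF G prem])
  have fs: "(\<lambda>z. f (snd z)) \<in> borel_measurable (SXT V B)"
    unfolding SXT_def by (rule measurable_compose[OF measurable_snd fm])
  have gm: "(\<lambda>z. f (snd z) * ?CX z) \<in> borel_measurable (SXT V B)"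
    by (rule borel_measurable_times_ennreal[OF fs CXm])
  have PO: "prob_space (P_O V B Ebar (t - tau) (return (SX V B) s))"
      "sets (P_O V B Ebar (t - tau) (return (SX V B) s)) = sets (SX V B)"
    using PO_props[OF G r prob_space_return[OF Cons.prems(3)]] by auto
  have "(\<integral>\<^sup>+x. fdd_chain (P_XT V B Ebar) (SXT V B) (map (\<lambda>(t, f). (t, f \<circ> snd)) (tf # rest)) tau (x, s) \<partial>muX V B)
      = (\<integral>\<^sup>+x. \<integral>\<^sup>+z. f (snd z) * ?CX z \<partial>P_XT V B Ebar (t - tau) (return (SXT V B) (x, s)) \<partial>muX V B)"
    unfolding tf by simp
  also have "\<dots> = (\<integral>\<^sup>+s'. \<integral>\<^sup>+x. f s' * ?CX (x, s') \<partial>muX V B \<partial>P_O V B Ebar (t - tau) (return (SX V B) s))"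
    using stepP[OF G r Cons.prems(3) gm] by simp
  also have "\<dots> = (\<integral>\<^sup>+s'. f s' * (\<integral>\<^sup>+x. ?CX (x, s') \<partial>muX V B) \<partial>P_O V B Ebar (t - tau) (return (SX V B) s))"
  proof (rule nn_integral_cong)
    fix s' assume "s' \<in> space (P_O V B Ebar (t - tau) (return (SX V B) s))"
    then have s': "s' \<in> space (SX V B)" using sets_eq_imp_space_eq[OF PO(2)] by simp
    have "(\<lambda>x. ?CX (x, s')) \<in> borel_measurable (muX V B)"
    proof -
      have "(\<lambda>x. (x, s')) \<in> muX V B \<rightarrow>\<^sub>M SXT V B"
        unfolding SXT_def
        by (rule measurable_Pair[OF measurable_ident_sets[OF sets_muX] measurable_const[OF s']])
      from measurable_compose[OF this CXm] show ?thesis .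
    qed
    then show "(\<integral>\<^sup>+x. f s' * ?CX (x, s') \<partial>muX V B) = f s' * (\<integral>\<^sup>+x. ?CX (x, s') \<partial>muX V B)"
      by (rule nn_integral_cmult)
  qed
  also have "\<dots> = (\<integral>\<^sup>+s'. f s' * fdd_chain (P_O V B Ebar) (SX V B) rest t s' \<partial>P_O V B Ebar (t - tau) (return (SX V B) s))"
  proof (rule nn_integral_cong)
    fix s' assume "s' \<in> space (P_O V B Ebar (t - tau) (return (SX V B) s))"
    then have s': "s' \<in> space (SX V B)" using sets_eq_imp_space_eq[OF PO(2)] by simp
    show "f s' * (\<integral>\<^sup>+x. ?CX (x, s') \<partial>muX V B) = f s' * fdd_chain (P_O V B Ebar) (SX V B) rest t s'"
      using Cons.IH[OF prem s'] by (simp add: comp_def)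
  qed
  also have "\<dots> = fdd_chain (P_O V B Ebar) (SX V B) (tf # rest) tau s"
    unfolding tf by simp
  finally show ?case .
qed

theorem theorem2p4:
  fixes V B :: "'v set" and Ebar :: "('v \<times> 'v) set" and Tb :: "'v \<Rightarrow> real"
    and \<nu> :: "('v \<Rightarrow> real) measure"
  assumes graph: "graph_ok V B Ebar"
    and Tb_pos: "\<forall>j\<in>B. Tb j > 0"
    and nu_prob: "prob_space \<nu>"
    and nu_sets: "sets \<nu> = sets (SX V B)"
    and nu_supp: "AE s in \<nu>. (\<forall>i\<in>V \<union> B. s i \<ge> 0) \<and> (\<forall>j\<in>B. s j = Tb j)"
  shows
    "(\<forall>t\<ge>0. P_XT V B Ebar t (muX V B \<Otimes>\<^sub>M \<nu>) = muX V B \<Otimes>\<^sub>M P_O V B Ebar t \<nu>) \<and>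
     (\<forall>tfs :: (real \<times> (('v \<Rightarrow> real) \<Rightarrow> ennreal)) list.
        sorted (map fst tfs) \<and> (\<forall>(t, f) \<in> set tfs. t \<ge> 0 \<and> f \<in> borel_measurable (SX V B)) \<longrightarrow>
        (\<integral>\<^sup>+ xs. fdd_chain (P_XT V B Ebar) (SXT V B) (map (\<lambda>(t, f). (t, f \<circ> snd)) tfs) 0 xs
             \<partial>(muX V B \<Otimes>\<^sub>M \<nu>))
        = (\<integral>\<^sup>+ s. fdd_chain (P_O V B Ebar) (SX V B) tfs 0 s \<partial>\<nu>))"
proof (intro conjI allI impI)
  fix t :: real assume "0 \<le> t"
  then show "P_XT V B Ebar t (muX V B \<Otimes>\<^sub>M \<nu>) = muX V B \<Otimes>\<^sub>M P_O V B Ebar t \<nu>"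
    by (rule part1[OF graph _ nu_prob nu_sets])
next
  fix tfs :: "(real \<times> (('v \<Rightarrow> real) \<Rightarrow> ennreal)) list"
  assume h: "sorted (map fst tfs) \<and> (\<forall>(t, f) \<in> set tfs. t \<ge> 0 \<and> f \<in> borel_measurable (SX V B))"
  then have h1: "sorted (map fst tfs)" and h2: "\<forall>(t, f) \<in> set tfs. 0 \<le> t \<and> f \<in> borel_measurable (SX V B)"
    by auto
  interpret MX: prob_space "muX V B" by (rule prob_muX[OF graph_fin_VB[OF graph]])
  interpret NU: prob_space \<nu> by (rule nu_prob)
  interpret PP: pair_prob_space "muX V B" \<nu> by unfold_locales
  have CXm: "(\<lambda>y. fdd_chain (P_XT V B Ebar) (SXT V B) (map (\<lambda>(t, f). (t, f \<circ> snd)) tfs) 0 y) \<in> borel_measurable (SXT V B)"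
    by (rule fdd_meas[OF graph h1 h2])
  have "(\<integral>\<^sup>+ xs. fdd_chain (P_XT V B Ebar) (SXT V B) (map (\<lambda>(t, f). (t, f \<circ> snd)) tfs) 0 xs \<partial>(muX V B \<Otimes>\<^sub>M \<nu>))
     = (\<integral>\<^sup>+s. \<integral>\<^sup>+x. fdd_chain (P_XT V B Ebar) (SXT V B) (map (\<lambda>(t, f). (t, f \<circ> snd)) tfs) 0 (x, s) \<partial>muX V B \<partial>\<nu>)"
    by (rule PP.nn_integral_snd[symmetric]) (simp add: measurable_cong_sets[OF sets_muX_SX_pair[OF nu_sets] refl] CXm)
  also have "\<dots> = (\<integral>\<^sup>+ s. fdd_chain (P_O V B Ebar) (SX V B) tfs 0 s \<partial>\<nu>)"
  proof (rule nn_integral_cong)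
    fix s assume "s \<in> space \<nu>"
    then have s: "s \<in> space (SX V B)" using sets_eq_imp_space_eq[OF nu_sets] by simp
    show "(\<integral>\<^sup>+x. fdd_chain (P_XT V B Ebar) (SXT V B) (map (\<lambda>(t, f). (t, f \<circ> snd)) tfs) 0 (x, s) \<partial>muX V B)
       = fdd_chain (P_O V B Ebar) (SX V B) tfs 0 s"
      by (rule fdd_eq[OF graph h1 h2 s])
  qed
  finally show "(\<integral>\<^sup>+ xs. fdd_chain (P_XT V B Ebar) (SXT V B) (map (\<lambda>(t, f). (t, f \<circ> snd)) tfs) 0 xs \<partial>(muX V B \<Otimes>\<^sub>M \<nu>))
        = (\<integral>\<^sup>+ s. fdd_chain (P_O V B Ebar) (SX V B) tfs 0 s \<partial>\<nu>)" .
qed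


end
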